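(* For all $t\in\mathbb R$, $\varepsilon>0$, $\gamma>0$, $$\Big|\sum_{k=1}^n\big(f_k(t)-1+\sigma_k^2t^2/2\big)\Big|\le p_E(t,\varepsilon,\gamma)\,L_{E,n}^3(\varepsilon,\gamma),\qquad \Big|\sum_{k=1}^n\big(f_k(t)-1+\sigma_k^2t^2/2\big)\Big|\le p_R(t,\varepsilon,\gamma)\,L_{R,n}^3(\varepsilon,\gamma),$$ where $$p_E(t,\varepsilon,\gamma)=t^2\min_{0<z\le\varepsilon}\Big[\frac{zt^2}{12}+\max\Big\{\frac{|t|}{6\gamma},\frac\varkappa z-\frac{zt^2}{24}\Big\}\Big],\qquad p_R(t,\varepsilon,\gamma)=t^2\max\Big\{\frac{|t|}{6\gamma},\frac\varkappa\varepsilon+\frac{\varepsilon t^2}{24},\frac{\varepsilon t^2}{12}\Big\}.$$ Moreover: $p_E(t,\varepsilon,\gamma)=\frac{\varkappa t^2}\varepsilon+\frac{\varepsilon t^4}{24}$ if $\varepsilon|t|\le t_\gamma$ and $=\frac{\sqrt{6\varkappa\gamma^2+1}}{6\gamma}|t|^3$ if $\varepsilon|t|>t_\gamma$; for $\gamma\ge\gamma_*$, $p_R(t,\varepsilon,\gamma)=\frac{\varkappa t^2}\varepsilon+\frac{\varepsilon t^4}{24}$ if $\varepsilon|t|\le t_\infty$ and $=\frac{\varepsilon t^4}{12}$ if $\varepsilon|t|>t_\infty$; for $\gamma<\gamma_*$, $p_R(t,\varepsilon,\gamma)$ equals $\frac{\varkappa t^2}\varepsilon+\frac{\varepsilon t^4}{24}$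 for $\varepsilon|t|\le t_{1,\gamma}$, $\frac{|t|^3}{6\gamma}$ for $t_{1,\gamma}<\varepsilon|t|\le t_{2,\gamma}$, and $\frac{\varepsilon t^4}{12}$ for $\varepsilon|t|>t_{2,\gamma}$; and $p_R(t,\varepsilon,\gamma)=p_R(t,\varepsilon,\min\{\gamma,\gamma_*\})$. The functions $t_\gamma$ and $t_{1,\gamma}$ are monotonically increasing in $\gamma$, with $t_\gamma\le t_{1,\gamma}\le t_\infty$ for all $\gamma>0$; $p_E$ and $p_R$ are monotonically decreasing in $\gamma>0$, $p_R$ does not depend on $\gamma$ for $\gamma\ge\gamma_*$, and $p_E$ is also monotonically decreasing in $\varepsilon$.
   Context: $X_1,\dots,X_n$ are independent real random variables with $\mathbb E X_k=0$, $\sigma_k^2=\mathbb E X_k^2<\infty$, normalized so that $\sum_k\sigma_k^2=1$; $f_k(t)=\mathbb E e^{itX_k}$. For $z\ge0$, $L_n(z)=\sum_k\mathbb E X_k^2\mathbf 1(|X_k|\ge z)$; for $z>0$, $M_n(z)=\sum_k\mathbb E X_k^3\mathbf 1(|X_k|<z)$. $L_{E,n}^3(\varepsilon,\gamma)=\sup_{0<z\le\varepsilon}\{\gamma|M_n(z)|+zL_n(z)\}$ and $L_{R,n}^3(\varepsilon,\gamma)=\gamma|M_n(\varepsilon)|+\sup_{0<z\le\varepsilon}zL_n(z)$. The constant $\varkappa=0.531551\ldots$ is $\sup_{x>0}x^{-2}\sqrt{(\cos x-1+x^2/2)^2+(\sin x-x)^2}$, and $\gamma_*=1/\sqrt{6\varkappa}=0.5599\ldots$.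 Further $t_\gamma=\frac2\gamma(\sqrt{(\gamma/\gamma_* )^2+1}-1)$, $t_\infty=\lim_{\gamma\to\infty}t_\gamma=2/\gamma_*$, $t_{2,\gamma}=2\max\{\gamma^{-1},\gamma_*^{-1}\}$, $t_{1,\gamma}=t_{2,\gamma}(1-\sqrt{(1-(\gamma/\gamma_* )^2)_+})$. *)

theory Defs
  imports "HOL-Probability.Probability"
begin

definition chf :: "'a measure \<Rightarrow> (nat \<Rightarrow> 'a \<Rightarrow> real) \<Rightarrow> nat \<Rightarrow> real \<Rightarrow> complex" where
  "chf M X k t = char (distr M borel (X k)) t"

definition sig2 :: "'a measure \<Rightarrow> (nat \<Rightarrow> 'a \<Rightarrow> real) \<Rightarrow> nat \<Rightarrow> real" where
  "sig2 M X k = (\<integral>\<omega>. (X k \<omega>)^2 \<partial>M)"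

definition Ln :: "'a measure \<Rightarrow> (nat \<Rightarrow> 'a \<Rightarrow> real) \<Rightarrow> nat \<Rightarrow> real \<Rightarrow> real" where
  "Ln M X n z = (\<Sum>k=1..n. \<integral>\<omega>. (X k \<omega>)^2 * indicator {x. \<bar>x\<bar> \<ge> z} (X k \<omega>) \<partial>M)"

definition Mn :: "'a measure \<Rightarrow> (nat \<Rightarrow> 'a \<Rightarrow> real) \<Rightarrow> nat \<Rightarrow> real \<Rightarrow> real" where
  "Mn M X n z = (\<Sum>k=1..n. \<integral>\<omega>. (X k \<omega>)^3 * indicator {x. \<bar>x\<bar> < z} (X k \<omega>) \<partial>M)"

definition LE3 :: "'a measure \<Rightarrow> (nat \<Rightarrow> 'a \<Rightarrow> real) \<Rightarrow> nat \<Rightarrow> real \<Rightarrow> real \<Rightarrow> real" where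
  "LE3 M X n \<epsilon> \<gamma> = (SUP z\<in>{0<..\<epsilon>}. \<gamma> * \<bar>Mn M X n z\<bar> + z * Ln M X n z)"

definition LR3 :: "'a measure \<Rightarrow> (nat \<Rightarrow> 'a \<Rightarrow> real) \<Rightarrow> nat \<Rightarrow> real \<Rightarrow> real \<Rightarrow> real" where
  "LR3 M X n \<epsilon> \<gamma> = \<gamma> * \<bar>Mn M X n \<epsilon>\<bar> + (SUP z\<in>{0<..\<epsilon>}. z * Ln M X n z)"

definition kappa :: real where
  "kappa = (SUP x\<in>{0<..}. sqrt ((cos x - 1 + x^2/2)^2 + (sin x - x)^2) / x^2)"

definition gamma_star :: real where
  "gamma_star = 1 / sqrt (6 * kappa)"

definition t_gam :: "real \<Rightarrow> real" where
  "t_gam \<gamma> = 2 / \<gamma> * (sqrt ((\<gamma> / gamma_star)^2 + 1) - 1)"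

text \<open>t_infinity = lim_{gamma -> infinity} t_gamma = 2 / gamma_star\<close>
definition t_inf :: real where
  "t_inf = 2 / gamma_star"

definition t2_gam :: "real \<Rightarrow> real" where
  "t2_gam \<gamma> = 2 * max (1 / \<gamma>) (1 / gamma_star)"

definition t1_gam :: "real \<Rightarrow> real" where
  "t1_gam \<gamma> = t2_gam \<gamma> * (1 - sqrt (max 0 (1 - (\<gamma> / gamma_star)^2)))"

definition pE_aux :: "real \<Rightarrow> real \<Rightarrow> real \<Rightarrow> real" where
  "pE_aux t \<gamma> z = z * t^2 / 12 + max (\<bar>t\<bar> / (6 * \<gamma>)) (kappa / z - z * t^2 / 24)"

definition pE :: "real \<Rightarrow> real \<Rightarrow> real \<Rightarrow> real" where
  "pE t \<epsilon> \<gamma> = t^2 * (INF z\<in>{0<..\<epsilon>}. pE_aux t \<gamma> z)"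

definition pR :: "real \<Rightarrow> real \<Rightarrow> real \<Rightarrow> real" where
  "pR t \<epsilon> \<gamma> = t^2 * max (\<bar>t\<bar> / (6 * \<gamma>)) (max (kappa / \<epsilon> + \<epsilon> * t^2 / 24) (\<epsilon> * t^2 / 12))"

end

theory Submission
  imports Defs
begin


definition kf :: "real \<Rightarrow> real" where
  "kf x = sqrt ((cos x - 1 + x^2/2)^2 + (sin x - x)^2) / x^2"

lemma cmod_R: "cmod (iexp u - 1 - \<i> * complex_of_real u + complex_of_real (u^2/2))
   = sqrt ((cos u - 1 + u^2/2)^2 + (sin u - u)^2)"
proof -
  have "iexp u - 1 - \<i> * complex_of_real u + complex_of_real (u^2/2)
        = Complex (cos u - 1 + u^2/2) (sin u - u)"
    by (simp add: complex_eq_iff exp_Euler cos_of_real sin_of_real Re_exp Im_exp)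
  then show ?thesis by (simp add: norm_complex_def)
qed

lemma cmod_R_le: "cmod (iexp u - 1 - \<i> * complex_of_real u + complex_of_real (u^2/2)) \<le> u^2"
proof -
  have a: "cmod (iexp u - (\<Sum>k \<le> 1. (\<i> * u)^k / fact k)) \<le> \<bar>u\<bar>^2 / 2"
    using iexp_approx1[of u 1] by (simp add: numeral_2_eq_2)
  have "iexp u - 1 - \<i> * complex_of_real u + complex_of_real (u^2/2)
     = (iexp u - (\<Sum>k \<le> 1. (\<i> * u)^k / fact k)) + complex_of_real (u^2/2)"
    by simp
  also have "cmod \<dots> \<le> cmod (iexp u - (\<Sum>k \<le> 1. (\<i> * u)^k / fact k)) + cmod (complex_of_real (u^2/2))"
    by (rule norm_triangle_ineq)
  also have "\<dots> \<le> u^2/2 + u^2/2" using a by (simp add: power2_abs norm_power)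
  finally show ?thesis by simp
qed

lemma kf_le1: "x > 0 \<Longrightarrow> kf x \<le> 1"
  using cmod_R_le[of x] unfolding kf_def cmod_R by (simp add: divide_le_eq)

lemma bdd_kf: "bdd_above (kf ` {0<..})"
  using kf_le1 by (auto intro!: bdd_aboveI2)

lemma kappa_kf: "kappa = (SUP x\<in>{0<..}. kf x)"
  unfolding kappa_def kf_def by simp

lemma kf_le_kappa: "x > 0 \<Longrightarrow> kf x \<le> kappa"
  unfolding kappa_kf by (rule cSUP_upper[OF _ bdd_kf]) auto

lemma kappa_pos: "kappa > 0"
proof -
  have "pi^2/2 - 2 > (0::real)" using pi_gt3 mult_strict_mono[of 3 pi 3 pi] by (simp add: power2_eq_square)
  have "(pi^2/2-2)^2 + pi^2 > (0::real)" by (simp add: add_nonneg_pos pi_gt_zero)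
  then have "kf pi > 0" unfolding kf_def by (simp add: pi_gt_zero)
  then show ?thesis using kf_le_kappa[of pi] pi_gt_zero by linarith
qed

lemma kappa_bound: "cmod (iexp u - 1 - \<i> * complex_of_real u + complex_of_real (u^2/2)) \<le> kappa * u^2"
proof (cases "u = 0")
  case True then show ?thesis by simp
next
  case False
  define v where "v = \<bar>u\<bar>"
  have v: "v > 0" using False by (simp add: v_def)
  have e: "sqrt ((cos u - 1 + u^2/2)^2 + (sin u - u)^2) = sqrt ((cos v - 1 + v^2/2)^2 + (sin v - v)^2)"
  proof (cases "u \<ge> 0")
    case True then show ?thesis by (simp add: v_def)
  next
    case False
    then have "v = -u" by (simp add: v_def)
    then show ?thesis by (simp add: power2_eq_square algebra_simps)
  qed
  have "kf v \<le> kappa" using kf_le_kappa v by simp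
  then have "sqrt ((cos v - 1 + v^2/2)^2 + (sin v - v)^2) \<le> kappa * v^2"
    using v unfolding kf_def by (simp add: divide_le_eq)
  then show ?thesis unfolding cmod_R e by (simp add: v_def power2_abs)
qed




definition qq :: real where "qq = sqrt (6 * kappa)"

lemma qq_pos: "qq > 0" using kappa_pos by (simp add: qq_def)
lemma qq_sq: "qq^2 = 6 * kappa" using kappa_pos by (simp add: qq_def)
lemma gs_eq: "gamma_star = 1 / qq" by (simp add: gamma_star_def qq_def)
lemma gs_pos: "gamma_star > 0" using qq_pos by (simp add: gs_eq)
lemma tinf_eq: "t_inf = 2 * qq" by (simp add: t_inf_def gs_eq)

lemma gam_ratio_sq: "(\<gamma> / gamma_star)^2 = 6 * kappa * \<gamma>^2"
  using qq_sq by (simp add: gs_eq power_divide field_simps)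

lemma tgam_props:
  assumes g: "\<gamma> > 0"
  shows "t_gam \<gamma> > 0" "(t_gam \<gamma>)^2/24 + t_gam \<gamma> / (6*\<gamma>) = kappa"
    "t_gam \<gamma> / 12 + 1 / (6*\<gamma>) = sqrt (6 * kappa * \<gamma>^2 + 1) / (6 * \<gamma>)"
proof -
  define R where "R = sqrt (6 * kappa * \<gamma>^2 + 1)"
  have R2: "R^2 = 6 * kappa * \<gamma>^2 + 1" unfolding R_def using kappa_pos by simp
  have "6 * kappa * \<gamma>^2 > 0" using kappa_pos g by simp
  then have R1: "R > 1" unfolding R_def by simp
  have T: "t_gam \<gamma> = 2 / \<gamma> * (R - 1)" unfolding t_gam_def R_def gam_ratio_sq ..
  show "t_gam \<gamma> > 0" using T R1 g by simp
  have "(2 / \<gamma> * (R - 1))^2/24 + 2 / \<gamma> * (R - 1) / (6*\<gamma>) = (R^2 - 1) / (6 * \<gamma>^2)"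
    using g by (simp add: field_simps power2_eq_square)
  also have "\<dots> = kappa" using R2 g by simp
  finally show "(t_gam \<gamma>)^2/24 + t_gam \<gamma> / (6*\<gamma>) = kappa" using T by simp
  show "t_gam \<gamma> / 12 + 1 / (6*\<gamma>) = sqrt (6 * kappa * \<gamma>^2 + 1) / (6 * \<gamma>)"
    using g unfolding T R_def[symmetric] by (simp add: field_simps)
qed

lemma quad_le:
  assumes g: "\<gamma> > 0" and s: "0 \<le> s" "s \<le> t_gam \<gamma>"
  shows "s^2/24 + s/(6*\<gamma>) \<le> kappa"
proof -
  have "s^2 \<le> (t_gam \<gamma>)^2" using s by (simp add: power_mono)
  moreover have "s/(6*\<gamma>) \<le> t_gam \<gamma>/(6*\<gamma>)" using s g by (intro divide_right_mono) auto
  ultimately show ?thesis using tgam_props(2)[OF g] by linarith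
qed

lemma quad_gt:
  assumes g: "\<gamma> > 0" and s: "t_gam \<gamma> < s"
  shows "s^2/24 + s/(6*\<gamma>) > kappa"
proof -
  have "s^2 > (t_gam \<gamma>)^2" using s tgam_props(1)[OF g] by (simp add: power_strict_mono)
  moreover have "s/(6*\<gamma>) > t_gam \<gamma>/(6*\<gamma>)" using s g by (intro divide_strict_right_mono) auto
  ultimately show ?thesis using tgam_props(2)[OF g] by linarith
qed

lemma tgam_sq_le: "\<gamma> > 0 \<Longrightarrow> (t_gam \<gamma>)^2 \<le> 24 * kappa"
proof -
  assume g: "\<gamma> > 0"
  have "t_gam \<gamma> / (6*\<gamma>) > 0" using tgam_props(1)[OF g] g by simp
  then show ?thesis using tgam_props(2)[OF g] by linarith
qed

lemma decr:
  assumes z: "0 < z" "z \<le> w" and w: "w^2 * t^2 \<le> 24 * kappa"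
  shows "kappa / w + w * t^2 / 24 \<le> kappa / z + z * t^2 / 24"
proof -
  have w0: "w > 0" using z by simp
  have e: "kappa / z + z * t^2 / 24 - (kappa / w + w * t^2 / 24) = (w - z) * (kappa - z * w * t^2 / 24) / (z * w)"
    using z w0 by (simp add: field_simps)
  have "z * w * t^2 \<le> w^2 * t^2" using z w0 by (simp add: power2_eq_square mult_right_mono)
  then have "kappa - z * w * t^2 / 24 \<ge> 0" using w by simp
  then have "(w - z) * (kappa - z * w * t^2 / 24) / (z * w) \<ge> 0" using z w0 by simp
  then show ?thesis using e by simp
qed

lemma aux_nonneg: "\<gamma> > 0 \<Longrightarrow> z > 0 \<Longrightarrow> pE_aux t \<gamma> z \<ge> 0"
proof -
  assume g: "\<gamma> > 0" and z: "z > 0"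
  have "\<bar>t\<bar>/(6*\<gamma>) \<ge> 0" using g by simp
  moreover have "z*t^2/12 \<ge> 0" using z by simp
  moreover have "max (\<bar>t\<bar> / (6 * \<gamma>)) (kappa / z - z * t^2 / 24) \<ge> \<bar>t\<bar>/(6*\<gamma>)" by simp
  ultimately show ?thesis unfolding pE_aux_def by linarith
qed

lemma pE_le:
  assumes "\<gamma> > 0" "z \<in> {0<..\<epsilon>}"
  shows "pE t \<epsilon> \<gamma> \<le> t^2 * pE_aux t \<gamma> z"
proof -
  have "(INF z\<in>{0<..\<epsilon>}. pE_aux t \<gamma> z) \<le> pE_aux t \<gamma> z"
    by (rule cINF_lower) (use assms aux_nonneg in \<open>auto intro!: bdd_belowI2\<close>)
  then show ?thesis unfolding pE_def by (simp add: mult_left_mono)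
qed

lemma pE_eqI:
  assumes g: "\<gamma> > 0" and e: "\<epsilon> > 0" and z0: "z0 \<in> {0<..\<epsilon>}"
    and min: "\<And>z. z \<in> {0<..\<epsilon>} \<Longrightarrow> pE_aux t \<gamma> z0 \<le> pE_aux t \<gamma> z"
  shows "pE t \<epsilon> \<gamma> = t^2 * pE_aux t \<gamma> z0"
proof -
  have "pE_aux t \<gamma> z0 \<le> (INF z\<in>{0<..\<epsilon>}. pE_aux t \<gamma> z)"
    by (rule cINF_greatest) (use e min in auto)
  then have "t^2 * pE_aux t \<gamma> z0 \<le> pE t \<epsilon> \<gamma>" unfolding pE_def by (simp add: mult_left_mono)
  with pE_le[OF g z0, of t] show ?thesis by simp
qed




lemma pE_main:
  assumes g: "\<gamma> > 0" and e: "\<epsilon> > 0"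
  shows "\<exists>z\<in>{0<..\<epsilon>}. pE t \<epsilon> \<gamma> = t^2 * pE_aux t \<gamma> z
           \<and> pE t \<epsilon> \<gamma> = (if \<epsilon> * \<bar>t\<bar> \<le> t_gam \<gamma>
                        then kappa * t^2 / \<epsilon> + \<epsilon> * t^4 / 24
                        else sqrt (6 * kappa * \<gamma>^2 + 1) / (6 * \<gamma>) * \<bar>t\<bar>^3)"
proof (cases "t = 0")
  case True
  have "pE t \<epsilon> \<gamma> = t^2 * pE_aux t \<gamma> \<epsilon>"
    using True unfolding pE_def by simp
  moreover have "\<epsilon> * \<bar>t\<bar> \<le> t_gam \<gamma>" using True tgam_props(1)[OF g] by simp
  ultimately show ?thesis using e True by auto
next
  case False
  define a where "a = \<bar>t\<bar>"
  have a: "a > 0" using False by (simp add: a_def)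
  have t2: "t^2 = a^2" by (simp add: a_def)
  have tt: "t*t = a*a" by (simp add: a_def)
  define T where "T = t_gam \<gamma>"
  have T0: "T > 0" and TT: "T^2/24 + T/(6*\<gamma>) = kappa" and TR: "T/12 + 1/(6*\<gamma>) = sqrt (6 * kappa * \<gamma>^2 + 1) / (6 * \<gamma>)"
    using tgam_props[OF g] by (simp_all add: T_def)
  have T24: "T^2 \<le> 24 * kappa" using tgam_sq_le[OF g] by (simp add: T_def)
  show ?thesis
  proof (cases "\<epsilon> * a \<le> T")
    case True
    have q: "(\<epsilon>*a)^2/24 + (\<epsilon>*a)/(6*\<gamma>) \<le> kappa" using quad_le[OF g _ True[unfolded T_def]] e a by simp
    have "a/(6*\<gamma>) \<le> kappa/\<epsilon> - \<epsilon>*a^2/24"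
    proof -
      have "kappa/\<epsilon> - \<epsilon>*a^2/24 - a/(6*\<gamma>) = (kappa - ((\<epsilon>*a)^2/24 + (\<epsilon>*a)/(6*\<gamma>))) / \<epsilon>"
        using e g by (simp add: field_simps power2_eq_square)
      also have "\<dots> \<ge> 0" using q e by simp
      finally show ?thesis by simp
    qed
    then have auxe: "pE_aux t \<gamma> \<epsilon> = kappa/\<epsilon> + \<epsilon>*t^2/24"
      unfolding pE_aux_def t2 a_def[symmetric] by simp
    have ea: "\<epsilon>^2 * t^2 \<le> 24 * kappa"
    proof -
      have "(\<epsilon>*a)^2 \<le> T^2" using True e a by (simp add: power_mono)
      then show ?thesis using T24 by (simp add: t2 power_mult_distrib)
    qed
    have min: "pE_aux t \<gamma> \<epsilon> \<le> pE_aux t \<gamma> z" if z: "z \<in> {0<..\<epsilon>}" for z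
    proof -
      have "pE_aux t \<gamma> z \<ge> z*t^2/12 + (kappa / z - z * t^2 / 24)" unfolding pE_aux_def by simp
      moreover have "kappa/\<epsilon> + \<epsilon>*t^2/24 \<le> kappa/z + z*t^2/24" using decr[of z \<epsilon> t] z ea by simp
      ultimately show ?thesis using auxe by simp
    qed
    have pe: "pE t \<epsilon> \<gamma> = t^2 * pE_aux t \<gamma> \<epsilon>" using pE_eqI[OF g e _ min] e by simp
    have "t^2 * pE_aux t \<gamma> \<epsilon> = kappa * t^2 / \<epsilon> + \<epsilon> * t^4 / 24"
      unfolding auxe by (simp add: field_simps power2_eq_square power4_eq_xxxx)
    then show ?thesis using pe e True by (intro bexI[of _ \<epsilon>]) (auto simp: a_def T_def)
  next
    case False
    define z1 where "z1 = T / a"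
    have z1: "z1 \<in> {0<..\<epsilon>}" using False T0 a e by (simp add: z1_def field_simps)
    have iden: "kappa / z1 - z1 * t^2 / 24 = a/(6*\<gamma>)"
    proof -
      have "kappa / z1 - z1 * t^2 / 24 = a * (kappa - T^2/24) / T"
        using T0 a by (simp add: z1_def t2 field_simps power2_eq_square tt)
      also have "\<dots> = a * (T/(6*\<gamma>)) / T"
      proof -
        have k: "kappa - T^2/24 = T/(6*\<gamma>)" using TT by linarith
        show ?thesis by (simp only: k)
      qed
      also have "\<dots> = a/(6*\<gamma>)" using T0 g by simp
      finally show ?thesis .
    qed
    have aux1: "pE_aux t \<gamma> z1 = z1*t^2/12 + a/(6*\<gamma>)"
      unfolding pE_aux_def iden by (simp add: a_def)
    have z1sq: "z1^2 * t^2 \<le> 24 * kappa" using T24 a by (simp add: z1_def t2 power_divide)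
    have min: "pE_aux t \<gamma> z1 \<le> pE_aux t \<gamma> z" if z: "z \<in> {0<..\<epsilon>}" for z
    proof (cases "z1 \<le> z")
      case True
      have "pE_aux t \<gamma> z \<ge> z*t^2/12 + a/(6*\<gamma>)" unfolding pE_aux_def by (simp add: a_def)
      moreover have "z1*t^2/12 \<le> z*t^2/12" using True by (simp add: mult_right_mono)
      ultimately show ?thesis using aux1 by simp
    next
      case False
      have "pE_aux t \<gamma> z \<ge> z*t^2/12 + (kappa / z - z * t^2 / 24)" unfolding pE_aux_def by simp
      moreover have "kappa/z1 + z1*t^2/24 \<le> kappa/z + z*t^2/24" using decr[of z z1 t] z False z1sq by simp
      moreover have "kappa/z1 + z1*t^2/24 = z1*t^2/12 + a/(6*\<gamma>)" using iden by simp
      ultimately show ?thesis using aux1 by simp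
    qed
    have pe: "pE t \<epsilon> \<gamma> = t^2 * pE_aux t \<gamma> z1" using pE_eqI[OF g e z1 min] by simp
    have "t^2 * pE_aux t \<gamma> z1 = a^3 * (T/12 + 1/(6*\<gamma>))"
      unfolding aux1 t2 using a by (simp add: z1_def field_simps power2_eq_square power3_eq_cube)
    also have "\<dots> = sqrt (6 * kappa * \<gamma>^2 + 1) / (6 * \<gamma>) * \<bar>t\<bar>^3" using TR by (simp add: a_def)
    finally show ?thesis using pe z1 False by (intro bexI[of _ z1]) (auto simp: a_def T_def)
  qed
qed




definition FF :: "real \<Rightarrow> real \<Rightarrow> real" where
  "FF s \<gamma> = max (s/(6*\<gamma>)) (max (kappa + s^2/24) (s^2/12))"

lemma mmax: "(c::real) \<ge> 0 \<Longrightarrow> c * max x y = max (c*x) (c*y)"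
proof (cases "x \<le> y")
  case True
  assume c: "c \<ge> 0"
  have "c*x \<le> c*y" using True c by (simp add: mult_left_mono)
  then show ?thesis using True by (simp add: max_absorb2)
next
  case False
  assume c: "c \<ge> 0"
  have "c*y \<le> c*x" using False c by (simp add: mult_left_mono)
  then show ?thesis using False by (simp add: max_absorb1)
qed

lemma pR_FF: assumes e: "\<epsilon> > 0" shows "pR t \<epsilon> \<gamma> = t^2/\<epsilon> * FF (\<epsilon>*\<bar>t\<bar>) \<gamma>"
proof -
  have "\<epsilon> * max (\<bar>t\<bar> / (6 * \<gamma>)) (max (kappa / \<epsilon> + \<epsilon> * t^2 / 24) (\<epsilon> * t^2 / 12))
     = max (\<epsilon> * (\<bar>t\<bar> / (6 * \<gamma>))) (max (\<epsilon>*(kappa / \<epsilon> + \<epsilon> * t^2 / 24)) (\<epsilon>*(\<epsilon> * t^2 / 12)))"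
    using e by (simp only: mmax less_imp_le)
  also have "\<dots> = FF (\<epsilon>*\<bar>t\<bar>) \<gamma>"
  proof -
    have 1: "\<epsilon> * (\<bar>t\<bar> / (6 * \<gamma>)) = \<epsilon>*\<bar>t\<bar> / (6 * \<gamma>)" by simp
    have 2: "\<epsilon>*(kappa / \<epsilon> + \<epsilon> * t^2 / 24) = kappa + (\<epsilon>*\<bar>t\<bar>)^2/24"
      using e by (simp add: field_simps power2_eq_square)
    have 3: "\<epsilon>*(\<epsilon> * t^2 / 12) = (\<epsilon>*\<bar>t\<bar>)^2/12"
      by (simp add: field_simps power2_eq_square)
    show ?thesis unfolding FF_def 1 2 3 ..
  qed
  finally show ?thesis unfolding pR_def using e by (simp add: field_simps)
qed

lemma FF_mono: "0 < \<gamma>1 \<Longrightarrow> \<gamma>1 \<le> \<gamma>2 \<Longrightarrow> 0 \<le> s \<Longrightarrow> FF s \<gamma>2 \<le> FF s \<gamma>1"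
  unfolding FF_def by (intro max.mono) (auto intro!: divide_left_mono)

lemma FF_big:
  assumes g: "gamma_star \<le> \<gamma>" and s: "0 \<le> s"
  shows "FF s \<gamma> = (if s \<le> 2*qq then kappa + s^2/24 else s^2/12)"
proof -
  have g0: "\<gamma> > 0" using gs_pos g by linarith
  have "s/(6*\<gamma>) \<le> s/(6*gamma_star)" using g s gs_pos by (intro divide_left_mono) auto
  also have "\<dots> = s*qq/6" by (simp add: gs_eq)
  also have "\<dots> \<le> kappa + s^2/24"
  proof -
    have "0 \<le> (qq - s/2)^2" by simp
    then have "s * qq \<le> qq^2 + s^2/4" by (simp add: power2_eq_square algebra_simps)
    then show ?thesis using qq_sq by (simp add: field_simps)
  qed
  finally have a: "s/(6*\<gamma>) \<le> kappa + s^2/24" .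
  have bc: "kappa + s^2/24 \<ge> s^2/12 \<longleftrightarrow> s \<le> 2*qq"
  proof
    assume "kappa + s^2/24 \<ge> s^2/12"
    then have "s^2 \<le> (2*qq)^2" using qq_sq by (simp add: power_mult_distrib)
    then show "s \<le> 2*qq" by (rule power2_le_imp_le) (use qq_pos in simp)
  next
    assume "s \<le> 2*qq"
    then have "s^2 \<le> (2*qq)^2" using s by (intro power_mono) auto
    then show "kappa + s^2/24 \<ge> s^2/12" using qq_sq by (simp add: power_mult_distrib)
  qed
  show ?thesis unfolding FF_def using a bc by auto
qed

lemma small_facts:
  assumes g: "0 < \<gamma>" "\<gamma> < gamma_star"
  shows "\<gamma> * qq < 1" "6*kappa*\<gamma>^2 < 1" "t2_gam \<gamma> = 2/\<gamma>"
    "t1_gam \<gamma> = 2/\<gamma> * (1 - sqrt (1 - 6*kappa*\<gamma>^2))"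
proof -
  show gq: "\<gamma> * qq < 1" using g qq_pos by (simp add: gs_eq field_simps)
  have "(\<gamma>*qq)^2 < 1" using gq g qq_pos by (simp add: power_less_one_iff)
  then show k: "6*kappa*\<gamma>^2 < 1" using qq_sq by (simp add: power_mult_distrib algebra_simps)
  have "1/gamma_star < 1/\<gamma>" using g by (simp add: divide_strict_left_mono)
  then show t2: "t2_gam \<gamma> = 2/\<gamma>" by (simp add: t2_gam_def)
  show "t1_gam \<gamma> = 2/\<gamma> * (1 - sqrt (1 - 6*kappa*\<gamma>^2))"
    unfolding t1_gam_def t2 gam_ratio_sq using k by simp
qed

lemma t1_alt:
  assumes g: "0 < \<gamma>" "\<gamma> < gamma_star"
  shows "t1_gam \<gamma> = 2*qq^2*\<gamma> / (1 + sqrt (1 - 6*kappa*\<gamma>^2))"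
proof -
  define D where "D = sqrt (1 - 6*kappa*\<gamma>^2)"
  have D2: "D^2 = 1 - 6*kappa*\<gamma>^2" unfolding D_def by (intro real_sqrt_pow2) (use small_facts(2)[OF g] in linarith)
  have D0: "D \<ge> 0" unfolding D_def by (intro real_sqrt_ge_zero) (use small_facts(2)[OF g] in linarith)
  have "(1 - D) * (1 + D) = qq^2 * \<gamma>^2" using D2 qq_sq by (simp add: algebra_simps power2_eq_square)
  then have e: "1 - D = qq^2 * \<gamma>^2 / (1 + D)" using D0 by (simp add: eq_divide_eq)
  have "2/\<gamma> * (1 - D) = 2*qq^2*\<gamma> / (1 + D)" unfolding e using g by (simp add: power2_eq_square)
  then show ?thesis using small_facts(4)[OF g] by (simp add: D_def)
qed

lemma D_nonneg: "0 < \<gamma> \<Longrightarrow> \<gamma> < gamma_star \<Longrightarrow> sqrt (1 - 6*kappa*\<gamma>^2) \<ge> 0"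
  by (intro real_sqrt_ge_zero) (use small_facts(2) in force)

lemma t1_le: assumes g: "0 < \<gamma>" "\<gamma> < gamma_star" shows "t1_gam \<gamma> \<le> 2*qq"
proof -
  define D where "D = sqrt (1 - 6*kappa*\<gamma>^2)"
  have D0: "D \<ge> 0" using D_nonneg[OF g] by (simp add: D_def)
  have X: "2*qq^2*\<gamma> \<ge> 0" using g by simp
  have "2*qq^2*\<gamma> / (1 + D) \<le> 2*qq^2*\<gamma> / 1" using D0 X by (intro divide_left_mono) auto
  also have "\<dots> \<le> 2*qq" using small_facts(1)[OF g] qq_pos by (simp add: power2_eq_square mult.commute)
  finally show ?thesis using t1_alt[OF g] by (simp add: D_def)
qed

lemma t1_big: "gamma_star \<le> \<gamma> \<Longrightarrow> t1_gam \<gamma> = 2*qq"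
proof -
  assume g: "gamma_star \<le> \<gamma>"
  have g0: "\<gamma> > 0" using gs_pos g by linarith
  have "1/\<gamma> \<le> 1/gamma_star" using g gs_pos by (intro divide_left_mono) auto
  then have "t2_gam \<gamma> = 2*qq" by (simp add: t2_gam_def max_def gs_eq)
  moreover have "\<gamma>/gamma_star \<ge> 1" using g gs_pos by (simp add: le_divide_eq)
  then have "(\<gamma>/gamma_star)^2 \<ge> 1" by (simp add: one_le_power)
  ultimately show ?thesis by (simp add: t1_gam_def)
qed

lemma tgam_alt: assumes g: "\<gamma> > 0" shows "t_gam \<gamma> = 2*qq^2*\<gamma> / (sqrt (qq^2*\<gamma>^2+1) + 1)"
proof -
  define R where "R = sqrt (qq^2*\<gamma>^2+1)"
  have R2: "R^2 = qq^2*\<gamma>^2+1" unfolding R_def by (intro real_sqrt_pow2) simp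
  have R0: "R \<ge> 0" by (simp add: R_def)
  have "t_gam \<gamma> = 2/\<gamma> * (R - 1)" unfolding t_gam_def gam_ratio_sq R_def qq_sq ..
  also have "(R - 1) * (R + 1) = qq^2 * \<gamma>^2" using R2 by (simp add: algebra_simps power2_eq_square)
  then have e: "R - 1 = qq^2 * \<gamma>^2 / (R + 1)" using R0 by (simp add: eq_divide_eq)
  have "2/\<gamma> * (R - 1) = 2*qq^2*\<gamma> / (R + 1)" unfolding e using g by (simp add: power2_eq_square)
  finally show ?thesis by (simp add: R_def)
qed




lemma FF_small:
  assumes g: "0 < \<gamma>" "\<gamma> < gamma_star" and s: "0 \<le> s"
  shows "FF s \<gamma> = (if s \<le> t1_gam \<gamma> then kappa + s^2/24 else if s \<le> 2/\<gamma> then s/(6*\<gamma>) else s^2/12)"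
proof -
  define D where "D = sqrt (1 - 6*kappa*\<gamma>^2)"
  have D2: "D^2 = 1 - 6*kappa*\<gamma>^2" unfolding D_def by (intro real_sqrt_pow2) (use small_facts(2)[OF g] in linarith)
  have D0: "D \<ge> 0" using D_nonneg[OF g] by (simp add: D_def)
  define r1 where "r1 = 2/\<gamma> * (1 - D)"
  define r2 where "r2 = 2/\<gamma> * (1 + D)"
  have r1t: "r1 = t1_gam \<gamma>" using small_facts(4)[OF g] by (simp add: r1_def D_def)
  have sum: "r1 + r2 = 4/\<gamma>"
  proof -
    have "r1 + r2 = 2/\<gamma>*((1-D)+(1+D))" unfolding r1_def r2_def by (rule distrib_left[symmetric])
    then show ?thesis by simp
  qed
  have prod: "r1 * r2 = 24 * kappa"
  proof -
    have "r1 * r2 = 4/\<gamma>^2 * (1 - D^2)" by (simp add: r1_def r2_def power2_eq_square field_simps)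
    also have "\<dots> = 24 * kappa" using g unfolding D2 by (simp add: field_simps power2_eq_square)
    finally show ?thesis .
  qed
  have ident: "kappa + s^2/24 - s/(6*\<gamma>) = (s - r1)*(s - r2)/24"
  proof -
    have "(s - r1)*(s - r2) = s^2 - s*(r1 + r2) + r1*r2" by (simp add: algebra_simps power2_eq_square)
    also have "\<dots> = s^2 - s*(4/\<gamma>) + 24*kappa" unfolding sum prod ..
    finally show ?thesis using g by (simp add: field_simps)
  qed
  have r12: "r1 \<le> r2" unfolding r1_def r2_def using D0 g by (intro mult_left_mono) auto
  have r2g: "2/\<gamma> \<le> r2"
  proof -
    have "2/\<gamma> * 1 \<le> 2/\<gamma> * (1 + D)" using D0 g by (intro mult_left_mono) auto
    then show ?thesis by (simp add: r2_def)
  qed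
  have gq: "qq < 1/\<gamma>" using small_facts(1)[OF g] g by (simp add: field_simps)
  show ?thesis
  proof (cases "s \<le> r1")
    case True
    have "(s - r1)*(s - r2) \<ge> 0" using True r12 by (intro mult_nonpos_nonpos) auto
    then have ab: "s/(6*\<gamma>) \<le> kappa + s^2/24" using ident by linarith
    have "s \<le> 2*qq" using True t1_le[OF g] r1t by simp
    then have "s^2 \<le> (2*qq)^2" using s by (intro power_mono) auto
    then have bc: "s^2/12 \<le> kappa + s^2/24" using qq_sq by (simp add: power_mult_distrib)
    show ?thesis unfolding FF_def using True ab bc r1t by simp
  next
    case F1: False
    show ?thesis
    proof (cases "s \<le> 2/\<gamma>")
      case True
      have "(s - r1)*(s - r2) \<le> 0" using F1 True r2g by (intro mult_nonneg_nonpos) auto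
      then have ab: "s/(6*\<gamma>) \<ge> kappa + s^2/24" using ident by linarith
      have "s/(6*\<gamma>) - s^2/12 = s * (2/\<gamma> - s) / 12" using g by (simp add: field_simps power2_eq_square)
      also have "\<dots> \<ge> 0" using True s by simp
      finally have ac: "s/(6*\<gamma>) \<ge> s^2/12" by simp
      show ?thesis unfolding FF_def using F1 True ab ac r1t by simp
    next
      case False
      have "s^2/12 - s/(6*\<gamma>) = s * (s - 2/\<gamma>) / 12" using g by (simp add: field_simps power2_eq_square)
      also have "\<dots> \<ge> 0" using False s by simp
      finally have ca: "s/(6*\<gamma>) \<le> s^2/12" by simp
      have "2*qq \<le> s" using False gq by simp
      then have "(2*qq)^2 \<le> s^2" using qq_pos by (intro power_mono) auto
      then have cb: "s^2/12 \<ge> kappa + s^2/24" using qq_sq by (simp add: power_mult_distrib)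
      show ?thesis unfolding FF_def using F1 False ca cb r1t by simp
    qed
  qed
qed

lemma tgam_mono: assumes "0 < \<gamma>1" "\<gamma>1 \<le> \<gamma>2" shows "t_gam \<gamma>1 \<le> t_gam \<gamma>2"
proof -
  have g2: "\<gamma>2 > 0" using assms by simp
  define R1 where "R1 = sqrt (qq^2*\<gamma>1^2+1)"
  define R2 where "R2 = sqrt (qq^2*\<gamma>2^2+1)"
  have R1: "R1 \<ge> 0" "R1^2 = qq^2*\<gamma>1^2+1" unfolding R1_def by (simp_all add: add_nonneg_nonneg)
  have R2: "R2 \<ge> 0" "R2^2 = qq^2*\<gamma>2^2+1" unfolding R2_def by (simp_all add: add_nonneg_nonneg)
  have sq: "\<gamma>1^2 \<le> \<gamma>2^2" using assms by (intro power_mono) auto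
  have "(\<gamma>1*R2)^2 \<le> (\<gamma>2*R1)^2"
    unfolding power_mult_distrib R1(2) R2(2) using sq by (simp add: algebra_simps)
  then have k: "\<gamma>1*R2 \<le> \<gamma>2*R1" by (rule power2_le_imp_le) (use R1 g2 in simp)
  have "2*qq^2*\<gamma>1 / (R1 + 1) \<le> 2*qq^2*\<gamma>2 / (R2 + 1)"
  proof -
    have "2*qq^2*\<gamma>1 * (R2 + 1) \<le> 2*qq^2*\<gamma>2 * (R1 + 1)"
    proof -
      have "\<gamma>1 * (R2 + 1) \<le> \<gamma>2 * (R1 + 1)" using k assms by (simp add: algebra_simps)
      then show ?thesis using qq_pos by (simp add: mult.assoc mult_left_mono)
    qed
    then show ?thesis using R1 R2 by (simp add: divide_simps)
  qed
  then show ?thesis using tgam_alt assms g2 by (simp add: R1_def R2_def)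
qed

lemma t1_mono: assumes "0 < \<gamma>1" "\<gamma>1 \<le> \<gamma>2" shows "t1_gam \<gamma>1 \<le> t1_gam \<gamma>2"
proof (cases "\<gamma>2 < gamma_star")
  case True
  then have g1: "\<gamma>1 < gamma_star" using assms by simp
  have g2: "0 < \<gamma>2" using assms by simp
  define D1 where "D1 = sqrt (1 - 6*kappa*\<gamma>1^2)"
  define D2 where "D2 = sqrt (1 - 6*kappa*\<gamma>2^2)"
  have D20: "D2 \<ge> 0" using D_nonneg[OF g2 True] by (simp add: D2_def)
  have "\<gamma>1^2 \<le> \<gamma>2^2" using assms by (intro power_mono) auto
  then have "D2 \<le> D1" unfolding D1_def D2_def using kappa_pos by (simp add: mult_left_mono)
  then have "2*qq^2*\<gamma>1 / (1 + D1) \<le> 2*qq^2*\<gamma>2 / (1 + D2)"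
    using assms D20 qq_pos by (intro frac_le) (auto simp: mult_left_mono)
  then show ?thesis using t1_alt[OF assms(1) g1] t1_alt[OF g2 True] by (simp add: D1_def D2_def)
next
  case False
  then have "t1_gam \<gamma>2 = 2*qq" using t1_big by simp
  moreover have "t1_gam \<gamma>1 \<le> 2*qq"
    using t1_le[OF assms(1)] t1_big[of \<gamma>1] by (cases "\<gamma>1 < gamma_star") auto
  ultimately show ?thesis by simp
qed

lemma tgam_le_t1: assumes g: "0 < \<gamma>" shows "t_gam \<gamma> \<le> t1_gam \<gamma>"
proof -
  define R where "R = sqrt (qq^2*\<gamma>^2+1)"
  have R1: "R \<ge> 1" unfolding R_def by simp
  have Rq: "qq*\<gamma> \<le> R" unfolding R_def using g qq_pos
    by (intro real_le_rsqrt) (simp add: power_mult_distrib)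
  have X: "0 \<le> 2*qq^2*\<gamma>" using g by simp
  show ?thesis
  proof (cases "\<gamma> < gamma_star")
    case True
    define D where "D = sqrt (1 - 6*kappa*\<gamma>^2)"
    have D0: "D \<ge> 0" using D_nonneg[OF g True] by (simp add: D_def)
    have "D \<le> 1" unfolding D_def using kappa_pos g by simp
    then have "2*qq^2*\<gamma> / (R + 1) \<le> 2*qq^2*\<gamma> / (1 + D)" using X D0 R1 by (intro divide_left_mono) auto
    then show ?thesis using tgam_alt[OF g] t1_alt[OF g True] by (simp add: R_def D_def)
  next
    case False
    have "2*qq^2*\<gamma> / (R + 1) \<le> 2*qq"
    proof -
      have "qq*(qq*\<gamma>) \<le> qq*R" using Rq qq_pos by (intro mult_left_mono) auto
      moreover have "2*qq^2*\<gamma> = 2*(qq*(qq*\<gamma>))" by (simp add: power2_eq_square)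
      moreover have "2*qq*(R+1) = 2*(qq*R) + 2*qq" by (simp add: algebra_simps)
      ultimately have "2*qq^2*\<gamma> \<le> 2*qq*(R+1)" using qq_pos by linarith
      then show ?thesis using R1 by (simp add: divide_le_eq)
    qed
    then show ?thesis using tgam_alt[OF g] t1_big[of \<gamma>] False by (simp add: R_def)
  qed
qed




lemma pR_eq_FF_conv:
  assumes e: "\<epsilon> > 0"
  shows "t^2/\<epsilon> * (kappa + (\<epsilon>*\<bar>t\<bar>)^2/24) = kappa * t^2 / \<epsilon> + \<epsilon> * t^4 / 24"
    "t^2/\<epsilon> * ((\<epsilon>*\<bar>t\<bar>)^2/12) = \<epsilon> * t^4 / 12"
    "t^2/\<epsilon> * ((\<epsilon>*\<bar>t\<bar>)/(6*\<gamma>)) = \<bar>t\<bar>^3 / (6 * \<gamma>)"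
proof -
  have tt: "\<bar>t\<bar>^2 = t^2" by simp
  show "t^2/\<epsilon> * (kappa + (\<epsilon>*\<bar>t\<bar>)^2/24) = kappa * t^2 / \<epsilon> + \<epsilon> * t^4 / 24"
    using e by (simp add: field_simps power_mult_distrib power2_eq_square power4_eq_xxxx)
  show "t^2/\<epsilon> * ((\<epsilon>*\<bar>t\<bar>)^2/12) = \<epsilon> * t^4 / 12"
    using e by (simp add: field_simps power_mult_distrib power2_eq_square power4_eq_xxxx)
  show "t^2/\<epsilon> * ((\<epsilon>*\<bar>t\<bar>)/(6*\<gamma>)) = \<bar>t\<bar>^3 / (6 * \<gamma>)"
    using e by (simp add: field_simps power2_eq_square power3_eq_cube flip: tt)
qed

lemma claim5:
  assumes e: "\<epsilon> > 0" and g: "\<gamma> \<ge> gamma_star"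
  shows "pR t \<epsilon> \<gamma> = (if \<epsilon> * \<bar>t\<bar> \<le> t_inf then kappa * t^2 / \<epsilon> + \<epsilon> * t^4 / 24 else \<epsilon> * t^4 / 12)"
proof -
  have f: "FF (\<epsilon>*\<bar>t\<bar>) \<gamma> = (if \<epsilon>*\<bar>t\<bar> \<le> 2*qq then kappa + (\<epsilon>*\<bar>t\<bar>)^2/24 else (\<epsilon>*\<bar>t\<bar>)^2/12)"
    using FF_big[OF g, of "\<epsilon>*\<bar>t\<bar>"] e by simp
  show ?thesis
  proof (cases "\<epsilon>*\<bar>t\<bar> \<le> 2*qq")
    case True
    then show ?thesis unfolding pR_FF[OF e] tinf_eq f by (simp only: True if_True pR_eq_FF_conv[OF e])
  next
    case False
    then show ?thesis unfolding pR_FF[OF e] tinf_eq f by (simp only: False if_False pR_eq_FF_conv[OF e])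
  qed
qed

lemma claim6:
  assumes e: "\<epsilon> > 0" and g: "\<gamma> > 0" "\<gamma> < gamma_star"
  shows "pR t \<epsilon> \<gamma> = (if \<epsilon> * \<bar>t\<bar> \<le> t1_gam \<gamma>
                        then kappa * t^2 / \<epsilon> + \<epsilon> * t^4 / 24
                        else if \<epsilon> * \<bar>t\<bar> \<le> t2_gam \<gamma>
                        then \<bar>t\<bar>^3 / (6 * \<gamma>)
                        else \<epsilon> * t^4 / 12)"
proof -
  have f: "FF (\<epsilon>*\<bar>t\<bar>) \<gamma> = (if \<epsilon>*\<bar>t\<bar> \<le> t1_gam \<gamma> then kappa + (\<epsilon>*\<bar>t\<bar>)^2/24 else if \<epsilon>*\<bar>t\<bar> \<le> 2/\<gamma> then (\<epsilon>*\<bar>t\<bar>)/(6*\<gamma>) else (\<epsilon>*\<bar>t\<bar>)^2/12)"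
    using FF_small[OF g, of "\<epsilon>*\<bar>t\<bar>"] e by simp
  show ?thesis
  proof (cases "\<epsilon>*\<bar>t\<bar> \<le> t1_gam \<gamma>")
    case True
    then show ?thesis unfolding pR_FF[OF e] small_facts(3)[OF g] f by (simp only: True if_True pR_eq_FF_conv[OF e])
  next
    case F1: False
    show ?thesis
    proof (cases "\<epsilon>*\<bar>t\<bar> \<le> 2/\<gamma>")
      case True
      then show ?thesis unfolding pR_FF[OF e] small_facts(3)[OF g] f by (simp only: F1 True if_True if_False pR_eq_FF_conv[OF e])
    next
      case False
      then show ?thesis unfolding pR_FF[OF e] small_facts(3)[OF g] f by (simp only: F1 False if_False pR_eq_FF_conv[OF e])
    qed
  qed
qed

lemma claim12: "\<epsilon> > 0 \<Longrightarrow> gamma_star \<le> \<gamma>1 \<Longrightarrow> gamma_star \<le> \<gamma>2 \<Longrightarrow> pR t \<epsilon> \<gamma>1 = pR t \<epsilon> \<gamma>2"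
  using claim5 by simp

lemma claim7: "\<epsilon> > 0 \<Longrightarrow> \<gamma> > 0 \<Longrightarrow> pR t \<epsilon> \<gamma> = pR t \<epsilon> (min \<gamma> gamma_star)"
  using claim12[of \<epsilon> \<gamma> gamma_star t] by (cases "\<gamma> \<le> gamma_star") (auto simp: min_def)

lemma claim11:
  assumes e: "\<epsilon> > 0" and g: "0 < \<gamma>1" "\<gamma>1 \<le> \<gamma>2"
  shows "pE t \<epsilon> \<gamma>2 \<le> pE t \<epsilon> \<gamma>1 \<and> pR t \<epsilon> \<gamma>2 \<le> pR t \<epsilon> \<gamma>1"
proof
  have g2: "\<gamma>2 > 0" using g by simp
  obtain z where z: "z \<in> {0<..\<epsilon>}" and pz: "pE t \<epsilon> \<gamma>1 = t^2 * pE_aux t \<gamma>1 z"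
    using pE_main[OF g(1) e, of t] by blast
  have "\<bar>t\<bar>/(6*\<gamma>2) \<le> \<bar>t\<bar>/(6*\<gamma>1)" using g by (intro divide_left_mono) auto
  then have "pE_aux t \<gamma>2 z \<le> pE_aux t \<gamma>1 z" unfolding pE_aux_def by simp
  then have "t^2 * pE_aux t \<gamma>2 z \<le> t^2 * pE_aux t \<gamma>1 z" by (simp add: mult_left_mono)
  then show "pE t \<epsilon> \<gamma>2 \<le> pE t \<epsilon> \<gamma>1" using pE_le[OF g2 z, of t] pz by simp
  have "FF (\<epsilon>*\<bar>t\<bar>) \<gamma>2 \<le> FF (\<epsilon>*\<bar>t\<bar>) \<gamma>1" using FF_mono[OF g] e by simp
  then show "pR t \<epsilon> \<gamma>2 \<le> pR t \<epsilon> \<gamma>1" unfolding pR_FF[OF e] using e by (intro mult_left_mono) auto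
qed

lemma claim13:
  assumes g: "\<gamma> > 0" and e: "0 < \<epsilon>1" "\<epsilon>1 \<le> \<epsilon>2"
  shows "pE t \<epsilon>2 \<gamma> \<le> pE t \<epsilon>1 \<gamma>"
proof -
  obtain z where z: "z \<in> {0<..\<epsilon>1}" and pz: "pE t \<epsilon>1 \<gamma> = t^2 * pE_aux t \<gamma> z"
    using pE_main[OF g e(1), of t] by blast
  have "z \<in> {0<..\<epsilon>2}" using z e by auto
  then show ?thesis using pE_le[OF g, of z \<epsilon>2 t] pz by simp
qed

lemma claim10: "\<gamma> > 0 \<Longrightarrow> t_gam \<gamma> \<le> t1_gam \<gamma> \<and> t1_gam \<gamma> \<le> t_inf"
proof -
  assume g: "\<gamma> > 0"
  have "t1_gam \<gamma> \<le> t_inf" using t1_le[OF g] t1_big[of \<gamma>] tinf_eq by (cases "\<gamma> < gamma_star") auto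
  then show ?thesis using tgam_le_t1[OF g] by simp
qed

lemma claim89: "mono_on {0<..} t_gam" "mono_on {0<..} t1_gam"
  by (auto intro!: mono_onI tgam_mono t1_mono)




lemma nn_int_2u:
  assumes m: "m \<ge> 0"
  shows "(\<integral>\<^sup>+u. ennreal (2*u * indicator {0..m} u) \<partial>lborel) = ennreal (m^2)"
proof -
  have "((\<lambda>u. 2*u) has_integral (m^2 - 0^2)) {0..m}"
    using m by (intro fundamental_theorem_of_calculus) (auto intro!: derivative_eq_intros simp: has_real_derivative_iff_has_vector_derivative[symmetric])
  then have "((\<lambda>u. 2*u) has_integral m^2) {0..m}" by simp
  then have "((\<lambda>u. if u \<in> {0..m} then 2*u else 0) has_integral m^2) UNIV"
    by (simp only: has_integral_restrict_UNIV)
  moreover have "(\<lambda>u. if u \<in> {0..m} then 2*u else 0) = (\<lambda>u. 2*u * indicator {0..m} u)"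
    by (auto simp: indicator_def)
  ultimately have I: "((\<lambda>u. 2*u * indicator {0..m} u) has_integral m^2) UNIV" by simp
  have "integral\<^sup>N lborel (\<lambda>u. 2*u * indicator {0..m} u) = m^2"
    by (rule nn_integral_has_integral_lborel[OF _ _ I]) (auto simp: indicator_def)
  then show ?thesis by simp
qed

lemma pointwise_min:
  assumes z: "z > 0"
  shows "ennreal (y^2 * min (y^2) (z^2)) \<le>
    (\<integral>\<^sup>+u. ennreal (2*u * indicator {0..z} u * (y^2 * indicator {x. \<bar>x\<bar> \<ge> u} y)) \<partial>lborel)"
proof -
  define m where "m = min z \<bar>y\<bar>"
  have m0: "m \<ge> 0" using z by (simp add: m_def)
  have pt: "ennreal (2*u * indicator {0..z} u * (y^2 * indicator {x. \<bar>x\<bar> \<ge> u} y))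
      = ennreal (y^2) * ennreal (2*u * indicator {0..m} u)" for u
    by (auto simp: indicator_def m_def ennreal_mult[symmetric] mult_ac)
  have "(\<integral>\<^sup>+u. ennreal (2*u * indicator {0..z} u * (y^2 * indicator {x. \<bar>x\<bar> \<ge> u} y)) \<partial>lborel)
      = ennreal (y^2) * ennreal (m^2)"
    unfolding pt by (simp add: nn_integral_cmult nn_int_2u[OF m0])
  also have "\<dots> = ennreal (y^2 * m^2)" by (simp add: ennreal_mult)
  also have "m^2 = min (y^2) (z^2)" using z by (auto simp: m_def min_def power2_le_iff_abs_le abs_le_square_iff)
  finally show ?thesis by simp
qed

lemma fub:
  fixes M :: "'a measure" and X :: "nat \<Rightarrow> 'a \<Rightarrow> real" and z S :: real
  assumes P: "prob_space M"
    and meas: "\<And>k. k \<in> {1..n} \<Longrightarrow> X k \<in> borel_measurable M"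
    and sq: "\<And>k. k \<in> {1..n} \<Longrightarrow> integrable M (\<lambda>\<omega>. (X k \<omega>)^2)"
    and z: "z > 0" and S: "\<And>u. u \<in> {0<..z} \<Longrightarrow> u * Ln M X n u \<le> S" and S0: "S \<ge> 0"
  shows "(\<Sum>k=1..n. \<integral>\<omega>. (X k \<omega>)^2 * min ((X k \<omega>)^2) (z^2) \<partial>M) \<le> 2*z*S"
proof -
  interpret P: prob_space M by (rule P)
  interpret PS: pair_sigma_finite M lborel
    unfolding pair_sigma_finite_def using P.sigma_finite_measure_axioms lborel.sigma_finite_measure_axioms by simp
  define Lk where "Lk k u = (\<integral>\<omega>. (X k \<omega>)^2 * indicator {x. \<bar>x\<bar> \<ge> u} (X k \<omega>) \<partial>M)" for k u
  define Fk where "Fk k \<omega> u = 2*u * indicator {0..z} u * ((X k \<omega>)^2 * indicator {x. \<bar>x\<bar> \<ge> u} (X k \<omega>))" for k \<omega> u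
  have intL: "integrable M (\<lambda>\<omega>. (X k \<omega>)^2 * indicator {x. \<bar>x\<bar> \<ge> u} (X k \<omega>))" if k: "k \<in> {1..n}" for k u
  proof (rule Bochner_Integration.integrable_bound[OF sq[OF k]])
    have [measurable]: "X k \<in> borel_measurable M" using meas[OF k] .
    show "(\<lambda>\<omega>. (X k \<omega>)^2 * indicator {x. \<bar>x\<bar> \<ge> u} (X k \<omega>)) \<in> borel_measurable M" by measurable
    show "AE x in M. norm ((X k x)^2 * indicator {x. \<bar>x\<bar> \<ge> u} (X k x)) \<le> norm ((X k x)^2)"
      by (auto simp: indicator_def)
  qed
  have Lk0: "Lk k u \<ge> 0" for k u unfolding Lk_def by (intro integral_nonneg_AE) (auto simp: indicator_def)
  have intQ: "integrable M (\<lambda>\<omega>. (X k \<omega>)^2 * min ((X k \<omega>)^2) (z^2))" if k: "k \<in> {1..n}" for k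
  proof (rule Bochner_Integration.integrable_bound)
    show "integrable M (\<lambda>\<omega>. z^2 * (X k \<omega>)^2)" using sq[OF k] by simp
    have [measurable]: "X k \<in> borel_measurable M" using meas[OF k] .
    show "(\<lambda>\<omega>. (X k \<omega>)^2 * min ((X k \<omega>)^2) (z^2)) \<in> borel_measurable M" by measurable
    show "AE x in M. norm ((X k x)^2 * min ((X k x)^2) (z^2)) \<le> norm (z^2 * (X k x)^2)"
      by (intro AE_I2) (simp add: abs_mult, metis min.cobounded2 mult.commute mult_left_mono zero_le_power2)
  qed
  have stepA: "ennreal (\<integral>\<omega>. (X k \<omega>)^2 * min ((X k \<omega>)^2) (z^2) \<partial>M)
      \<le> (\<integral>\<^sup>+u. ennreal (2*u * indicator {0..z} u * Lk k u) \<partial>lborel)" if k: "k \<in> {1..n}" for k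
  proof -
    have [measurable]: "X k \<in> borel_measurable M" using meas[OF k] .
    have "ennreal (\<integral>\<omega>. (X k \<omega>)^2 * min ((X k \<omega>)^2) (z^2) \<partial>M)
        = (\<integral>\<^sup>+\<omega>. ennreal ((X k \<omega>)^2 * min ((X k \<omega>)^2) (z^2)) \<partial>M)"
      by (rule nn_integral_eq_integral[symmetric]) (use intQ[OF k] in auto)
    also have "\<dots> \<le> (\<integral>\<^sup>+\<omega>. (\<integral>\<^sup>+u. ennreal (Fk k \<omega> u) \<partial>lborel) \<partial>M)"
      unfolding Fk_def by (intro nn_integral_mono pointwise_min z)
    also have "\<dots> = (\<integral>\<^sup>+u. (\<integral>\<^sup>+\<omega>. ennreal (Fk k \<omega> u) \<partial>M) \<partial>lborel)"
      by (rule PS.Fubini'[symmetric]) (unfold Fk_def, measurable)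
    also have "\<dots> = (\<integral>\<^sup>+u. ennreal (2*u * indicator {0..z} u * Lk k u) \<partial>lborel)"
    proof (rule nn_integral_cong)
      fix u :: real
      have "(\<integral>\<^sup>+\<omega>. ennreal (Fk k \<omega> u) \<partial>M) = ennreal (\<integral>\<omega>. Fk k \<omega> u \<partial>M)"
        unfolding Fk_def
        by (rule nn_integral_eq_integral) (use intL[OF k, of u] in \<open>auto simp: indicator_def\<close>)
      also have "(\<integral>\<omega>. Fk k \<omega> u \<partial>M) = 2*u * indicator {0..z} u * Lk k u"
        unfolding Fk_def Lk_def by simp
      finally show "(\<integral>\<^sup>+\<omega>. ennreal (Fk k \<omega> u) \<partial>M) = ennreal (2*u * indicator {0..z} u * Lk k u)" .
    qed
    finally show ?thesis .
  qed
  have measA: "(\<lambda>u. ennreal (2*u * indicator {0..z} u * Lk k u)) \<in> borel_measurable lborel" if k: "k \<in> {1..n}" for k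
  proof -
    have [measurable]: "X k \<in> borel_measurable M" using meas[OF k] .
    have "(\<lambda>u. \<integral>\<^sup>+\<omega>. ennreal (Fk k \<omega> u) \<partial>M) \<in> borel_measurable lborel"
      unfolding Fk_def by measurable
    moreover have "(\<integral>\<^sup>+\<omega>. ennreal (Fk k \<omega> u) \<partial>M) = ennreal (2*u * indicator {0..z} u * Lk k u)" for u
    proof -
      have "(\<integral>\<^sup>+\<omega>. ennreal (Fk k \<omega> u) \<partial>M) = ennreal (\<integral>\<omega>. Fk k \<omega> u \<partial>M)"
        unfolding Fk_def
        by (rule nn_integral_eq_integral) (use intL[OF k, of u] in \<open>auto simp: indicator_def\<close>)
      also have "(\<integral>\<omega>. Fk k \<omega> u \<partial>M) = 2*u * indicator {0..z} u * Lk k u"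
        unfolding Fk_def Lk_def by simp
      finally show ?thesis .
    qed
    ultimately show ?thesis by simp
  qed
  have Q0: "(\<integral>\<omega>. (X k \<omega>)^2 * min ((X k \<omega>)^2) (z^2) \<partial>M) \<ge> 0" for k
    by (intro integral_nonneg_AE) auto
  have "ennreal (\<Sum>k=1..n. \<integral>\<omega>. (X k \<omega>)^2 * min ((X k \<omega>)^2) (z^2) \<partial>M)
      = (\<Sum>k=1..n. ennreal (\<integral>\<omega>. (X k \<omega>)^2 * min ((X k \<omega>)^2) (z^2) \<partial>M))"
    using Q0 by (simp add: sum_ennreal)
  also have "\<dots> \<le> (\<Sum>k=1..n. \<integral>\<^sup>+u. ennreal (2*u * indicator {0..z} u * Lk k u) \<partial>lborel)"
    by (intro sum_mono stepA) auto
  also have "\<dots> = (\<integral>\<^sup>+u. (\<Sum>k=1..n. ennreal (2*u * indicator {0..z} u * Lk k u)) \<partial>lborel)"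
    by (rule nn_integral_sum[symmetric]) (rule measA, simp)
  also have "\<dots> = (\<integral>\<^sup>+u. ennreal (2*u * indicator {0..z} u * Ln M X n u) \<partial>lborel)"
  proof (rule nn_integral_cong)
    fix u :: real
    have "(\<Sum>k=1..n. ennreal (2*u * indicator {0..z} u * Lk k u)) = ennreal (\<Sum>k=1..n. 2*u * indicator {0..z} u * Lk k u)"
      using Lk0 by (intro sum_ennreal) (auto simp: indicator_def)
    also have "(\<Sum>k=1..n. 2*u * indicator {0..z} u * Lk k u) = 2*u * indicator {0..z} u * Ln M X n u"
      unfolding Ln_def Lk_def by (simp add: sum_distrib_left)
    finally show "(\<Sum>k=1..n. ennreal (2*u * indicator {0..z} u * Lk k u)) = ennreal (2*u * indicator {0..z} u * Ln M X n u)" .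
  qed
  also have "\<dots> \<le> (\<integral>\<^sup>+u. ennreal (2*S) * indicator {0..z} u \<partial>lborel)"
  proof (intro nn_integral_mono)
    fix u :: real
    show "ennreal (2*u * indicator {0..z} u * Ln M X n u) \<le> ennreal (2*S) * indicator {0..z} u"
    proof (cases "u \<in> {0<..z}")
      case True
      then show ?thesis using S[OF True] by (simp add: ennreal_leI)
    next
      case False
      then have "u \<notin> {0..z} \<or> u = 0" by auto
      then show ?thesis by (auto simp: indicator_def)
    qed
  qed
  also have "\<dots> = ennreal (2*S) * ennreal z" using z by (simp add: nn_integral_cmult_indicator)
  also have "\<dots> = ennreal (2*z*S)" using S0 z by (simp add: ennreal_mult[symmetric] mult_ac)
  finally show ?thesis using S0 z by (simp add: ennreal_le_iff)
qed




lemma taylor3: "iexp u - (\<Sum>k \<le> 3. (\<i> * complex_of_real u)^k / fact k)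
   = iexp u - 1 - \<i> * complex_of_real u + complex_of_real (u^2/2) + \<i> * complex_of_real (u^3/6)"
proof -
  have "(\<Sum>k \<le> 3. (\<i> * complex_of_real u)^k / fact k) = 1 + \<i> * u - u^2/2 - \<i> * u^3/6"
    by (simp add: eval_nat_numeral fact_numeral power_mult_distrib field_simps)
  then show ?thesis by (simp add: algebra_simps)
qed

lemma per_k:
  fixes M :: "'a measure" and Y :: "'a \<Rightarrow> real"
  assumes P: "prob_space M" and Ym[measurable]: "Y \<in> borel_measurable M"
    and Yi: "integrable M Y" and Y0: "(\<integral>\<omega>. Y \<omega> \<partial>M) = 0"
    and Y2: "integrable M (\<lambda>\<omega>. (Y \<omega>)^2)" and z: "z > 0"
  shows "\<exists>I. char (distr M borel Y) t - 1 + complex_of_real ((\<integral>\<omega>. (Y \<omega>)^2 \<partial>M) * t^2 / 2)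
            = I - \<i> * complex_of_real (t^3/6 * (\<integral>\<omega>. (Y \<omega>)^3 * indicator {x. \<bar>x\<bar> < z} (Y \<omega>) \<partial>M))
         \<and> cmod I \<le> t^4/24 * (\<integral>\<omega>. (Y \<omega>)^4 * indicator {x. \<bar>x\<bar> < z} (Y \<omega>) \<partial>M)
                  + kappa * t^2 * (\<integral>\<omega>. (Y \<omega>)^2 * indicator {x. \<bar>x\<bar> \<ge> z} (Y \<omega>) \<partial>M)"
proof -
  interpret P: prob_space M by (rule P)
  define Y3 where "Y3 \<omega> = (Y \<omega>)^3 * indicator {x. \<bar>x\<bar> < z} (Y \<omega>)" for \<omega>
  define Y4 where "Y4 \<omega> = (Y \<omega>)^4 * indicator {x. \<bar>x\<bar> < z} (Y \<omega>)" for \<omega>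
  define Z2 where "Z2 \<omega> = (Y \<omega>)^2 * indicator {x. \<bar>x\<bar> \<ge> z} (Y \<omega>)" for \<omega>
  have [measurable]: "Y3 \<in> borel_measurable M" "Y4 \<in> borel_measurable M" "Z2 \<in> borel_measurable M"
    unfolding Y3_def Y4_def Z2_def by measurable
  have iY3: "integrable M Y3"
  proof (rule Bochner_Integration.integrable_bound)
    show "integrable M (\<lambda>\<omega>. z * (Y \<omega>)^2)" using Y2 by simp
    show "AE x in M. norm (Y3 x) \<le> norm (z * (Y x)^2)"
    proof (intro AE_I2)
      fix x
      have "\<bar>Y x\<bar> * (Y x)^2 \<le> z * (Y x)^2" if "\<bar>Y x\<bar> < z" using that by (intro mult_right_mono) auto
      then show "norm (Y3 x) \<le> norm (z * (Y x)^2)" using z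
        by (auto simp: Y3_def indicator_def abs_mult power_abs eval_nat_numeral)
    qed
  qed simp
  have iY4: "integrable M Y4"
  proof (rule Bochner_Integration.integrable_bound)
    show "integrable M (\<lambda>\<omega>. z^2 * (Y \<omega>)^2)" using Y2 by simp
    show "AE x in M. norm (Y4 x) \<le> norm (z^2 * (Y x)^2)"
    proof (intro AE_I2)
      fix x
      have "(Y x)^2 * (Y x)^2 \<le> z^2 * (Y x)^2" if "\<bar>Y x\<bar> < z"
      proof -
        have "\<bar>Y x\<bar>^2 \<le> z^2" using that by (intro power_mono) auto
        then show ?thesis by (intro mult_right_mono) auto
      qed
      then show "norm (Y4 x) \<le> norm (z^2 * (Y x)^2)" using z
        by (auto simp: Y4_def indicator_def abs_mult power_abs eval_nat_numeral)
    qed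
  qed simp
  have iZ2: "integrable M Z2"
  proof (rule Bochner_Integration.integrable_bound[OF Y2])
    show "AE x in M. norm (Z2 x) \<le> norm ((Y x)^2)" by (auto simp: Z2_def indicator_def)
  qed simp
  define G where "G \<omega> = iexp (t * Y \<omega>) - 1 - \<i> * complex_of_real (t * Y \<omega>)
     + complex_of_real (t^2/2 * (Y \<omega>)^2) + \<i> * complex_of_real (t^3/6 * Y3 \<omega>)" for \<omega>
  have iexpm[measurable]: "(\<lambda>\<omega>. iexp (t * Y \<omega>)) \<in> borel_measurable M" by measurable
  have iexpi: "integrable M (\<lambda>\<omega>. iexp (t * Y \<omega>))"
    by (rule P.integrable_const_bound[of _ 1]) (auto simp: norm_exp_i_times)
  define f3 where "f3 \<omega> = \<i> * complex_of_real (t * Y \<omega>)" for \<omega>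
  define f4 where "f4 \<omega> = complex_of_real (t^2/2 * (Y \<omega>)^2)" for \<omega>
  define f5 where "f5 \<omega> = \<i> * complex_of_real (t^3/6 * Y3 \<omega>)" for \<omega>
  have i3: "integrable M f3" unfolding f3_def using Yi by simp
  have i4: "integrable M f4" unfolding f4_def by (intro integrable_of_real integrable_mult_right Y2)
  have i5: "integrable M f5" unfolding f5_def using iY3 by simp
  have i1: "integrable M (\<lambda>\<omega>. iexp (t * Y \<omega>) - 1)" using iexpi by simp
  have i13: "integrable M (\<lambda>\<omega>. iexp (t * Y \<omega>) - 1 - f3 \<omega>)" using i1 i3 by simp
  have i134: "integrable M (\<lambda>\<omega>. iexp (t * Y \<omega>) - 1 - f3 \<omega> + f4 \<omega>)" using i13 i4 by simp
  have intG: "(\<integral>\<omega>. G \<omega> \<partial>M) = char (distr M borel Y) t - 1 + complex_of_real (t^2/2 * (\<integral>\<omega>. (Y \<omega>)^2 \<partial>M))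
       + \<i> * complex_of_real (t^3/6 * (\<integral>\<omega>. Y3 \<omega> \<partial>M))"
  proof -
    have ch: "char (distr M borel Y) t = (\<integral>\<omega>. iexp (t * Y \<omega>) \<partial>M)"
      unfolding char_def by (rule integral_distr) auto
    have e3: "(\<integral>\<omega>. f3 \<omega> \<partial>M) = 0"
    proof -
      have "(\<integral>\<omega>. f3 \<omega> \<partial>M) = \<i> * (\<integral>\<omega>. complex_of_real (t * Y \<omega>) \<partial>M)"
        unfolding f3_def by (rule integral_mult_right_zero)
      also have "\<dots> = \<i> * complex_of_real (\<integral>\<omega>. t * Y \<omega> \<partial>M)" by (simp only: integral_complex_of_real)
      also have "(\<integral>\<omega>. t * Y \<omega> \<partial>M) = t * (\<integral>\<omega>. Y \<omega> \<partial>M)" by (rule integral_mult_right_zero)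
      finally show ?thesis using Y0 by simp
    qed
    have e4: "(\<integral>\<omega>. f4 \<omega> \<partial>M) = complex_of_real (t^2/2 * (\<integral>\<omega>. (Y \<omega>)^2 \<partial>M))"
      unfolding f4_def by (simp only: integral_complex_of_real integral_mult_right_zero)
    have e5: "(\<integral>\<omega>. f5 \<omega> \<partial>M) = \<i> * complex_of_real (t^3/6 * (\<integral>\<omega>. Y3 \<omega> \<partial>M))"
      unfolding f5_def by (simp only: integral_complex_of_real integral_mult_right_zero)
    have e1: "(\<integral>\<omega>. iexp (t * Y \<omega>) - 1 \<partial>M) = (\<integral>\<omega>. iexp (t * Y \<omega>) \<partial>M) - 1"
      using iexpi by (subst Bochner_Integration.integral_diff) (auto simp: P.prob_space)
    have "(\<integral>\<omega>. G \<omega> \<partial>M) = (\<integral>\<omega>. (iexp (t * Y \<omega>) - 1 - f3 \<omega> + f4 \<omega>) + f5 \<omega> \<partial>M)"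
      unfolding G_def f3_def f4_def f5_def by simp
    also have "\<dots> = (\<integral>\<omega>. iexp (t * Y \<omega>) - 1 - f3 \<omega> + f4 \<omega> \<partial>M) + (\<integral>\<omega>. f5 \<omega> \<partial>M)"
      by (rule Bochner_Integration.integral_add[OF i134 i5])
    also have "(\<integral>\<omega>. iexp (t * Y \<omega>) - 1 - f3 \<omega> + f4 \<omega> \<partial>M) = (\<integral>\<omega>. iexp (t * Y \<omega>) - 1 - f3 \<omega> \<partial>M) + (\<integral>\<omega>. f4 \<omega> \<partial>M)"
      by (rule Bochner_Integration.integral_add[OF i13 i4])
    also have "(\<integral>\<omega>. iexp (t * Y \<omega>) - 1 - f3 \<omega> \<partial>M) = (\<integral>\<omega>. iexp (t * Y \<omega>) - 1 \<partial>M) - (\<integral>\<omega>. f3 \<omega> \<partial>M)"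
      by (rule Bochner_Integration.integral_diff[OF i1 i3])
    finally show ?thesis unfolding ch e1 e3 e4 e5 by simp
  qed
  define H where "H \<omega> = t^4/24 * Y4 \<omega> + kappa * t^2 * Z2 \<omega>" for \<omega>
  have iH: "integrable M H" unfolding H_def using iY4 iZ2 by simp
  have iG: "integrable M G"
  proof -
    have "G = (\<lambda>\<omega>. (iexp (t * Y \<omega>) - 1 - f3 \<omega> + f4 \<omega>) + f5 \<omega>)"
      unfolding G_def f3_def f4_def f5_def by (simp add: fun_eq_iff)
    then show ?thesis using Bochner_Integration.integrable_add[OF i134 i5] by simp
  qed
  have ptw: "norm (G \<omega>) \<le> H \<omega>" for \<omega>
  proof (cases "\<bar>Y \<omega>\<bar> < z")
    case True
    have "G \<omega> = iexp (t * Y \<omega>) - (\<Sum>k \<le> 3. (\<i> * complex_of_real (t * Y \<omega>))^k / fact k)"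
      unfolding taylor3 G_def Y3_def using True by (simp add: power_mult_distrib)
    then have "norm (G \<omega>) \<le> \<bar>t * Y \<omega>\<bar>^4 / 24"
      using iexp_approx1[of "t * Y \<omega>" 3] by (simp add: eval_nat_numeral fact_numeral)
    then show ?thesis using True unfolding H_def Y4_def Z2_def
      by (simp add: power_mult_distrib power_abs indicator_def)
  next
    case False
    have Geq: "G \<omega> = iexp (t * Y \<omega>) - 1 - \<i> * complex_of_real (t * Y \<omega>) + complex_of_real ((t * Y \<omega>)^2/2)"
      unfolding G_def Y3_def using False by (simp add: power_mult_distrib)
    have "norm (G \<omega>) \<le> kappa * (t * Y \<omega>)^2" unfolding Geq by (rule kappa_bound)
    then show ?thesis using False unfolding H_def Y4_def Z2_def
      by (simp add: power_mult_distrib indicator_def mult_ac)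
  qed
  have "norm (\<integral>\<omega>. G \<omega> \<partial>M) \<le> (\<integral>\<omega>. H \<omega> \<partial>M)"
  proof -
    have "norm (\<integral>\<omega>. G \<omega> \<partial>M) \<le> (\<integral>\<omega>. norm (G \<omega>) \<partial>M)" by (rule integral_norm_bound)
    also have "\<dots> \<le> (\<integral>\<omega>. H \<omega> \<partial>M)" using iG iH ptw by (intro integral_mono) auto
    finally show ?thesis .
  qed
  also have "(\<integral>\<omega>. H \<omega> \<partial>M) = t^4/24 * (\<integral>\<omega>. Y4 \<omega> \<partial>M) + kappa * t^2 * (\<integral>\<omega>. Z2 \<omega> \<partial>M)"
    unfolding H_def using iY4 iZ2 by simp
  finally have nb: "cmod (\<integral>\<omega>. G \<omega> \<partial>M) \<le> t^4/24 * (\<integral>\<omega>. Y4 \<omega> \<partial>M) + kappa * t^2 * (\<integral>\<omega>. Z2 \<omega> \<partial>M)" .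
  show ?thesis
  proof (intro exI conjI)
    show "cmod (\<integral>\<omega>. G \<omega> \<partial>M) \<le> t^4/24 * (\<integral>\<omega>. (Y \<omega>)^4 * indicator {x. \<bar>x\<bar> < z} (Y \<omega>) \<partial>M)
                  + kappa * t^2 * (\<integral>\<omega>. (Y \<omega>)^2 * indicator {x. \<bar>x\<bar> \<ge> z} (Y \<omega>) \<partial>M)"
      using nb unfolding Y4_def Z2_def .
    show "char (distr M borel Y) t - 1 + complex_of_real ((\<integral>\<omega>. (Y \<omega>)^2 \<partial>M) * t^2 / 2)
            = (\<integral>\<omega>. G \<omega> \<partial>M) - \<i> * complex_of_real (t^3/6 * (\<integral>\<omega>. (Y \<omega>)^3 * indicator {x. \<bar>x\<bar> < z} (Y \<omega>) \<partial>M))"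
      unfolding intG Y3_def by (simp add: mult_ac)
  qed
qed




lemma int_facts:
  fixes M :: "'a measure" and Y :: "'a \<Rightarrow> real"
  assumes Ym[measurable]: "Y \<in> borel_measurable M"
    and Y2: "integrable M (\<lambda>\<omega>. (Y \<omega>)^2)" and z: "z > 0"
  shows "integrable M (\<lambda>\<omega>. (Y \<omega>)^4 * indicator {x. \<bar>x\<bar> < z} (Y \<omega>))"
    "integrable M (\<lambda>\<omega>. (Y \<omega>)^3 * indicator {x. \<bar>x\<bar> < z} (Y \<omega>))"
    "integrable M (\<lambda>\<omega>. (Y \<omega>)^2 * indicator {x. \<bar>x\<bar> \<ge> z} (Y \<omega>))"
    "\<And>\<omega>. \<bar>(Y \<omega>)^3 * indicator {x. \<bar>x\<bar> < z} (Y \<omega>)\<bar> \<le> z * (Y \<omega>)^2"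
proof -
  show b3: "\<bar>(Y \<omega>)^3 * indicator {x. \<bar>x\<bar> < z} (Y \<omega>)\<bar> \<le> z * (Y \<omega>)^2" for \<omega>
  proof -
    have "\<bar>Y \<omega>\<bar> * (Y \<omega>)^2 \<le> z * (Y \<omega>)^2" if "\<bar>Y \<omega>\<bar> < z" using that by (intro mult_right_mono) auto
    then show ?thesis using z by (auto simp: indicator_def abs_mult power_abs eval_nat_numeral)
  qed
  show "integrable M (\<lambda>\<omega>. (Y \<omega>)^3 * indicator {x. \<bar>x\<bar> < z} (Y \<omega>))"
  proof (rule Bochner_Integration.integrable_bound)
    show "integrable M (\<lambda>\<omega>. z * (Y \<omega>)^2)" using Y2 by simp
    show "AE x in M. norm ((Y x)^3 * indicator {x. \<bar>x\<bar> < z} (Y x)) \<le> norm (z * (Y x)^2)"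
      using b3 z by (intro AE_I2) (simp add: abs_mult)
  qed simp
  show "integrable M (\<lambda>\<omega>. (Y \<omega>)^4 * indicator {x. \<bar>x\<bar> < z} (Y \<omega>))"
  proof (rule Bochner_Integration.integrable_bound)
    show "integrable M (\<lambda>\<omega>. z^2 * (Y \<omega>)^2)" using Y2 by simp
    show "AE x in M. norm ((Y x)^4 * indicator {x. \<bar>x\<bar> < z} (Y x)) \<le> norm (z^2 * (Y x)^2)"
    proof (intro AE_I2)
      fix x
      have "(Y x)^2 * (Y x)^2 \<le> z^2 * (Y x)^2" if "\<bar>Y x\<bar> < z"
      proof -
        have "\<bar>Y x\<bar>^2 \<le> z^2" using that by (intro power_mono) auto
        then show ?thesis by (intro mult_right_mono) auto
      qed
      then show "norm ((Y x)^4 * indicator {x. \<bar>x\<bar> < z} (Y x)) \<le> norm (z^2 * (Y x)^2)" using z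
        by (auto simp: indicator_def abs_mult power_abs eval_nat_numeral)
    qed
  qed simp
  show "integrable M (\<lambda>\<omega>. (Y \<omega>)^2 * indicator {x. \<bar>x\<bar> \<ge> z} (Y \<omega>))"
  proof (rule Bochner_Integration.integrable_bound[OF Y2])
    show "AE x in M. norm ((Y x)^2 * indicator {x. \<bar>x\<bar> \<ge> z} (Y x)) \<le> norm ((Y x)^2)"
      by (auto simp: indicator_def)
  qed simp
qed

context
  fixes M :: "'a measure" and X :: "nat \<Rightarrow> 'a \<Rightarrow> real" and n :: nat
  assumes P: "prob_space M"
    and meas: "\<And>k. k \<in> {1..n} \<Longrightarrow> X k \<in> borel_measurable M"
    and Xi: "\<And>k. k \<in> {1..n} \<Longrightarrow> integrable M (X k)"
    and X0: "\<And>k. k \<in> {1..n} \<Longrightarrow> (\<integral>\<omega>. X k \<omega> \<partial>M) = 0"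
    and X2: "\<And>k. k \<in> {1..n} \<Longrightarrow> integrable M (\<lambda>\<omega>. (X k \<omega>)^2)"
    and norm1: "(\<Sum>k=1..n. sig2 M X k) = 1"
begin

lemma Ln_nonneg: "Ln M X n u \<ge> 0"
  unfolding Ln_def by (intro sum_nonneg integral_nonneg_AE) (auto simp: indicator_def)

lemma Ln_le1: "Ln M X n u \<le> 1"
proof -
  have "Ln M X n u \<le> (\<Sum>k=1..n. sig2 M X k)" unfolding Ln_def sig2_def
  proof (intro sum_mono integral_mono)
    fix k assume k: "k \<in> {1..n}"
    show "integrable M (\<lambda>\<omega>. (X k \<omega>)^2)" by (rule X2[OF k])
    have "u > 0 \<or> u \<le> 0" by auto
    show "integrable M (\<lambda>\<omega>. (X k \<omega>)^2 * indicator {x. \<bar>x\<bar> \<ge> u} (X k \<omega>))"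
    proof (rule Bochner_Integration.integrable_bound[OF X2[OF k]])
      have [measurable]: "X k \<in> borel_measurable M" using meas[OF k] .
      show "(\<lambda>\<omega>. (X k \<omega>)^2 * indicator {x. \<bar>x\<bar> \<ge> u} (X k \<omega>)) \<in> borel_measurable M" by measurable
      show "AE x in M. norm ((X k x)^2 * indicator {x. \<bar>x\<bar> \<ge> u} (X k x)) \<le> norm ((X k x)^2)"
        by (auto simp: indicator_def)
    qed
    show "(X k \<omega>)^2 * indicator {x. \<bar>x\<bar> \<ge> u} (X k \<omega>) \<le> (X k \<omega>)^2" for \<omega>
      by (auto simp: indicator_def)
  qed
  then show ?thesis using norm1 by simp
qed

lemma Mn_le: assumes u: "u > 0" shows "\<bar>Mn M X n u\<bar> \<le> u"
proof -
  have "\<bar>Mn M X n u\<bar> \<le> (\<Sum>k=1..n. \<bar>\<integral>\<omega>. (X k \<omega>)^3 * indicator {x. \<bar>x\<bar> < u} (X k \<omega>) \<partial>M\<bar>)"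
    unfolding Mn_def by (rule sum_abs)
  also have "\<dots> \<le> (\<Sum>k=1..n. u * sig2 M X k)"
  proof (intro sum_mono)
    fix k assume k: "k \<in> {1..n}"
    have [measurable]: "X k \<in> borel_measurable M" using meas[OF k] .
    note F = int_facts[OF meas[OF k] X2[OF k] u]
    have "\<bar>\<integral>\<omega>. (X k \<omega>)^3 * indicator {x. \<bar>x\<bar> < u} (X k \<omega>) \<partial>M\<bar>
        \<le> (\<integral>\<omega>. \<bar>(X k \<omega>)^3 * indicator {x. \<bar>x\<bar> < u} (X k \<omega>)\<bar> \<partial>M)"
      by (rule integral_abs_bound)
    also have "\<dots> \<le> (\<integral>\<omega>. u * (X k \<omega>)^2 \<partial>M)"
      using F X2[OF k] by (intro integral_mono) auto
    also have "\<dots> = u * sig2 M X k" by (simp add: sig2_def)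
    finally show "\<bar>\<integral>\<omega>. (X k \<omega>)^3 * indicator {x. \<bar>x\<bar> < u} (X k \<omega>) \<partial>M\<bar> \<le> u * sig2 M X k" .
  qed
  also have "\<dots> = u" using norm1 by (simp add: sum_distrib_left[symmetric])
  finally show ?thesis .
qed

lemma core:
  assumes z: "z > 0" and S0: "S \<ge> 0" and S: "\<And>u. u \<in> {0<..z} \<Longrightarrow> u * Ln M X n u \<le> S"
  shows "cmod (\<Sum>k=1..n. chf M X k t - 1 + complex_of_real (sig2 M X k * t^2 / 2))
     \<le> \<bar>t\<bar>^3/6 * \<bar>Mn M X n z\<bar> + t^4/24 * (2*z*S - z^2 * Ln M X n z) + kappa * t^2 * Ln M X n z"
proof -
  define A where "A k = (\<integral>\<omega>. (X k \<omega>)^4 * indicator {x. \<bar>x\<bar> < z} (X k \<omega>) \<partial>M)" for k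
  define L where "L k = (\<integral>\<omega>. (X k \<omega>)^2 * indicator {x. \<bar>x\<bar> \<ge> z} (X k \<omega>) \<partial>M)" for k
  define m where "m k = (\<integral>\<omega>. (X k \<omega>)^3 * indicator {x. \<bar>x\<bar> < z} (X k \<omega>) \<partial>M)" for k
  have "\<forall>k\<in>{1..n}. \<exists>I. chf M X k t - 1 + complex_of_real (sig2 M X k * t^2 / 2) = I - \<i> * complex_of_real (t^3/6 * m k)
        \<and> cmod I \<le> t^4/24 * A k + kappa * t^2 * L k"
  proof
    fix k assume k: "k \<in> {1..n}"
    show "\<exists>I. chf M X k t - 1 + complex_of_real (sig2 M X k * t^2 / 2) = I - \<i> * complex_of_real (t^3/6 * m k)
        \<and> cmod I \<le> t^4/24 * A k + kappa * t^2 * L k"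
      using per_k[OF P meas[OF k] Xi[OF k] X0[OF k] X2[OF k] z, of t]
      unfolding chf_def sig2_def A_def L_def m_def .
  qed
  then obtain I where I: "\<And>k. k \<in> {1..n} \<Longrightarrow> chf M X k t - 1 + complex_of_real (sig2 M X k * t^2 / 2) = I k - \<i> * complex_of_real (t^3/6 * m k)"
    and Ib: "\<And>k. k \<in> {1..n} \<Longrightarrow> cmod (I k) \<le> t^4/24 * A k + kappa * t^2 * L k"
    by metis
  have "(\<Sum>k=1..n. chf M X k t - 1 + complex_of_real (sig2 M X k * t^2 / 2)) = (\<Sum>k=1..n. I k - \<i> * complex_of_real (t^3/6 * m k))"
    using I by (intro sum.cong) auto
  also have "\<dots> = (\<Sum>k=1..n. I k) - \<i> * complex_of_real (t^3/6 * Mn M X n z)"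
    by (simp add: sum_subtractf sum_distrib_left m_def Mn_def)
  finally have eq: "(\<Sum>k=1..n. chf M X k t - 1 + complex_of_real (sig2 M X k * t^2 / 2)) = (\<Sum>k=1..n. I k) - \<i> * complex_of_real (t^3/6 * Mn M X n z)" .
  have "cmod (\<Sum>k=1..n. I k) \<le> (\<Sum>k=1..n. cmod (I k))" by (rule norm_sum)
  also have "\<dots> \<le> (\<Sum>k=1..n. t^4/24 * A k + kappa * t^2 * L k)" using Ib by (intro sum_mono) auto
  also have "\<dots> = t^4/24 * (\<Sum>k=1..n. A k) + kappa * t^2 * Ln M X n z"
    by (simp add: sum.distrib sum_distrib_left Ln_def L_def)
  finally have n1: "cmod (\<Sum>k=1..n. I k) \<le> t^4/24 * (\<Sum>k=1..n. A k) + kappa * t^2 * Ln M X n z" .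
  have sumQ: "(\<Sum>k=1..n. \<integral>\<omega>. (X k \<omega>)^2 * min ((X k \<omega>)^2) (z^2) \<partial>M) = (\<Sum>k=1..n. A k) + z^2 * Ln M X n z"
  proof -
    have "(\<integral>\<omega>. (X k \<omega>)^2 * min ((X k \<omega>)^2) (z^2) \<partial>M) = A k + z^2 * L k" if k: "k \<in> {1..n}" for k
    proof -
      note F = int_facts[OF meas[OF k] X2[OF k] z]
      have pt: "(X k \<omega>)^2 * min ((X k \<omega>)^2) (z^2) = (X k \<omega>)^4 * indicator {x. \<bar>x\<bar> < z} (X k \<omega>)
          + z^2 * ((X k \<omega>)^2 * indicator {x. \<bar>x\<bar> \<ge> z} (X k \<omega>))" for \<omega>
      proof (cases "\<bar>X k \<omega>\<bar> < z")
        case True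
        then have "\<bar>X k \<omega>\<bar>^2 \<le> z^2" by (intro power_mono) auto
        then have "(X k \<omega>)^2 \<le> z^2" by simp
        then show ?thesis using True by (simp add: indicator_def min_def eval_nat_numeral)
      next
        case False
        then have "z^2 \<le> \<bar>X k \<omega>\<bar>^2" using z by (intro power_mono) auto
        then have "(X k \<omega>)^2 \<ge> z^2" by simp
        then show ?thesis using False by (simp add: indicator_def min_def mult.commute)
      qed
      show ?thesis unfolding pt A_def L_def using F by simp
    qed
    then show ?thesis by (simp add: sum.distrib sum_distrib_left Ln_def L_def)
  qed
  have fb: "(\<Sum>k=1..n. A k) + z^2 * Ln M X n z \<le> 2*z*S"
    using fub[OF P meas X2 z S S0] sumQ by simp
  have t4: "t^4/24 * (\<Sum>k=1..n. A k) \<le> t^4/24 * (2*z*S - z^2 * Ln M X n z)"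
    using fb by (intro mult_left_mono) auto
  have "cmod (\<Sum>k=1..n. chf M X k t - 1 + complex_of_real (sig2 M X k * t^2 / 2))
      \<le> cmod (\<Sum>k=1..n. I k) + cmod (\<i> * complex_of_real (t^3/6 * Mn M X n z))"
    unfolding eq by (rule norm_triangle_ineq4)
  also have "cmod (\<i> * complex_of_real (t^3/6 * Mn M X n z)) = \<bar>t\<bar>^3/6 * \<bar>Mn M X n z\<bar>"
    by (simp add: norm_mult abs_mult power_abs norm_power)
  finally show ?thesis using n1 t4 by linarith
qed

lemma bdd_LE: assumes e: "\<epsilon> > 0" and g: "\<gamma> > 0"
  shows "bdd_above ((\<lambda>z. \<gamma> * \<bar>Mn M X n z\<bar> + z * Ln M X n z) ` {0<..\<epsilon>})"
proof (rule bdd_aboveI2)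
  fix z assume z: "z \<in> {0<..\<epsilon>}"
  have "\<gamma> * \<bar>Mn M X n z\<bar> \<le> \<gamma> * \<epsilon>" using Mn_le[of z] z g by (intro mult_left_mono) auto
  moreover have "z * Ln M X n z \<le> \<epsilon> * 1" using Ln_le1[of z] Ln_nonneg[of z] z by (intro mult_mono) auto
  ultimately show "\<gamma> * \<bar>Mn M X n z\<bar> + z * Ln M X n z \<le> \<gamma> * \<epsilon> + \<epsilon>" by simp
qed

lemma bdd_LR: assumes e: "\<epsilon> > 0"
  shows "bdd_above ((\<lambda>z. z * Ln M X n z) ` {0<..\<epsilon>})"
proof (rule bdd_aboveI2)
  fix z assume z: "z \<in> {0<..\<epsilon>}"
  show "z * Ln M X n z \<le> \<epsilon> * 1" using Ln_le1[of z] Ln_nonneg[of z] z by (intro mult_mono) auto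
qed

lemma mixbound: "0 \<le> A \<Longrightarrow> 0 \<le> B \<Longrightarrow> (a::real) * A + c * B \<le> max a c * (A + B)"
proof -
  assume A: "0 \<le> A" and B: "0 \<le> B"
  have "a * A \<le> max a c * A" using A by (intro mult_right_mono) auto
  moreover have "c * B \<le> max a c * B" using B by (intro mult_right_mono) auto
  ultimately show ?thesis by (simp add: distrib_left)
qed

lemma claim1:
  assumes e: "\<epsilon> > 0" and g: "\<gamma> > 0"
  shows "cmod (\<Sum>k=1..n. chf M X k t - 1 + complex_of_real (sig2 M X k * t^2 / 2)) \<le> pE t \<epsilon> \<gamma> * LE3 M X n \<epsilon> \<gamma>"
proof -
  obtain z where z: "z \<in> {0<..\<epsilon>}" and pz: "pE t \<epsilon> \<gamma> = t^2 * pE_aux t \<gamma> z"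
    using pE_main[OF g e, of t] by blast
  define S where "S = LE3 M X n \<epsilon> \<gamma>"
  have up: "\<gamma> * \<bar>Mn M X n u\<bar> + u * Ln M X n u \<le> S" if "u \<in> {0<..\<epsilon>}" for u
    unfolding S_def LE3_def by (rule cSUP_upper[OF that bdd_LE[OF e g]])
  have z0: "z > 0" using z by simp
  have Aa0: "\<gamma> * \<bar>Mn M X n z\<bar> \<ge> 0" using g by simp
  have B0: "z * Ln M X n z \<ge> 0" using z0 Ln_nonneg by simp
  have S0: "S \<ge> 0" using up[OF z] Aa0 B0 by linarith
  have Su: "u * Ln M X n u \<le> S" if "u \<in> {0<..z}" for u
  proof -
    have "u \<in> {0<..\<epsilon>}" using that z by auto
    then show ?thesis using up[of u] g by (smt (verit) abs_ge_zero mult_nonneg_nonneg)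
  qed
  note c = core[OF z0 S0 Su, of t]
  define a where "a = \<bar>t\<bar>/(6*\<gamma>)"
  define cc where "cc = kappa/z - z*t^2/24"
  have "\<bar>t\<bar>^3/6 * \<bar>Mn M X n z\<bar> + t^4/24 * (2*z*S - z^2 * Ln M X n z) + kappa * t^2 * Ln M X n z
      = t^2 * (a * (\<gamma> * \<bar>Mn M X n z\<bar>) + cc * (z * Ln M X n z) + z*t^2/12 * S)"
    unfolding a_def cc_def using g z0
    by (simp add: field_simps power2_eq_square power3_eq_cube power4_eq_xxxx abs_mult_self_eq)
  also have "\<dots> \<le> t^2 * (max a cc * S + z*t^2/12 * S)"
  proof -
    have "a * (\<gamma> * \<bar>Mn M X n z\<bar>) + cc * (z * Ln M X n z) \<le> max a cc * (\<gamma> * \<bar>Mn M X n z\<bar> + z * Ln M X n z)"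
      by (rule mixbound[OF Aa0 B0])
    also have "\<dots> \<le> max a cc * S"
    proof -
      have "a \<ge> 0" using g by (simp add: a_def)
      then have "max a cc \<ge> 0" by (simp add: le_max_iff_disj)
      then show ?thesis using up[OF z] by (intro mult_left_mono) auto
    qed
    finally show ?thesis by (intro mult_left_mono) auto
  qed
  also have "\<dots> = pE t \<epsilon> \<gamma> * S" unfolding pz pE_aux_def a_def cc_def by (simp add: algebra_simps)
  finally show ?thesis using c by (simp add: S_def)
qed

lemma claim2:
  assumes e: "\<epsilon> > 0" and g: "\<gamma> > 0"
  shows "cmod (\<Sum>k=1..n. chf M X k t - 1 + complex_of_real (sig2 M X k * t^2 / 2)) \<le> pR t \<epsilon> \<gamma> * LR3 M X n \<epsilon> \<gamma>"
proof -
  define S where "S = (SUP z\<in>{0<..\<epsilon>}. z * Ln M X n z)"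
  have Su: "u * Ln M X n u \<le> S" if "u \<in> {0<..\<epsilon>}" for u
    unfolding S_def by (rule cSUP_upper[OF that bdd_LR[OF e]])
  have B0: "\<epsilon> * Ln M X n \<epsilon> \<ge> 0" using e Ln_nonneg by simp
  have BS: "\<epsilon> * Ln M X n \<epsilon> \<le> S" using Su[of \<epsilon>] e by simp
  have S0: "S \<ge> 0" using B0 BS by linarith
  note c = core[OF e S0 Su, of t]
  have Aa0: "\<gamma> * \<bar>Mn M X n \<epsilon>\<bar> \<ge> 0" using g by simp
  define a where "a = \<bar>t\<bar>/(6*\<gamma>)"
  define cc where "cc = kappa/\<epsilon> - \<epsilon>*t^2/24"
  define m2 where "m2 = max (kappa / \<epsilon> + \<epsilon> * t^2 / 24) (\<epsilon> * t^2 / 12)"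
  have "\<bar>t\<bar>^3/6 * \<bar>Mn M X n \<epsilon>\<bar> + t^4/24 * (2*\<epsilon>*S - \<epsilon>^2 * Ln M X n \<epsilon>) + kappa * t^2 * Ln M X n \<epsilon>
      = t^2 * (a * (\<gamma> * \<bar>Mn M X n \<epsilon>\<bar>) + (cc * (\<epsilon> * Ln M X n \<epsilon>) + \<epsilon>*t^2/12 * S))"
    unfolding a_def cc_def using g e
    by (simp add: field_simps power2_eq_square power3_eq_cube power4_eq_xxxx abs_mult_self_eq)
  also have "\<dots> \<le> t^2 * (a * (\<gamma> * \<bar>Mn M X n \<epsilon>\<bar>) + m2 * S)"
  proof -
    have "cc * (\<epsilon> * Ln M X n \<epsilon>) + \<epsilon>*t^2/12 * S \<le> m2 * S"
    proof (cases "cc \<ge> 0")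
      case True
      have "cc * (\<epsilon> * Ln M X n \<epsilon>) \<le> cc * S" using True BS by (intro mult_left_mono)
      moreover have "cc + \<epsilon>*t^2/12 \<le> m2" unfolding m2_def cc_def by simp
      then have "(cc + \<epsilon>*t^2/12) * S \<le> m2 * S" using S0 by (intro mult_right_mono)
      ultimately show ?thesis by (simp add: algebra_simps)
    next
      case False
      have "cc * (\<epsilon> * Ln M X n \<epsilon>) \<le> 0" using False B0 by (simp add: mult_nonpos_nonneg)
      moreover have "\<epsilon>*t^2/12 * S \<le> m2 * S" unfolding m2_def using S0 by (intro mult_right_mono) auto
      ultimately show ?thesis by simp
    qed
    then show ?thesis by (intro mult_left_mono) auto
  qed
  also have "\<dots> \<le> t^2 * (max a m2 * (\<gamma> * \<bar>Mn M X n \<epsilon>\<bar> + S))"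
    by (intro mult_left_mono mixbound Aa0 S0) auto
  also have "\<dots> = pR t \<epsilon> \<gamma> * LR3 M X n \<epsilon> \<gamma>"
    unfolding pR_def LR3_def S_def[symmetric] a_def m2_def by simp
  finally show ?thesis using c by simp
qed

end


theorem lemma6:
  fixes M :: "'a measure" and X :: "nat \<Rightarrow> 'a \<Rightarrow> real" and n :: nat
  assumes "prob_space M"
    and "\<And>k. k \<in> {1..n} \<Longrightarrow> X k \<in> borel_measurable M"
    and "prob_space.indep_vars M (\<lambda>_. borel) X {1..n}"
    and "\<And>k. k \<in> {1..n} \<Longrightarrow> integrable M (X k)"
    and "\<And>k. k \<in> {1..n} \<Longrightarrow> (\<integral>\<omega>. X k \<omega> \<partial>M) = 0"
    and "\<And>k. k \<in> {1..n} \<Longrightarrow> integrable M (\<lambda>\<omega>. (X k \<omega>)^2)"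
    and "(\<Sum>k=1..n. sig2 M X k) = 1"
  shows
    "(\<forall>t \<epsilon> \<gamma>. \<epsilon> > 0 \<longrightarrow> \<gamma> > 0 \<longrightarrow>
        cmod (\<Sum>k=1..n. chf M X k t - 1 + complex_of_real (sig2 M X k * t^2 / 2))
          \<le> pE t \<epsilon> \<gamma> * LE3 M X n \<epsilon> \<gamma>)
   \<and> (\<forall>t \<epsilon> \<gamma>. \<epsilon> > 0 \<longrightarrow> \<gamma> > 0 \<longrightarrow>
        cmod (\<Sum>k=1..n. chf M X k t - 1 + complex_of_real (sig2 M X k * t^2 / 2))
          \<le> pR t \<epsilon> \<gamma> * LR3 M X n \<epsilon> \<gamma>)
   \<and> (\<forall>t \<epsilon> \<gamma>. \<epsilon> > 0 \<longrightarrow> \<gamma> > 0 \<longrightarrow>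
        (\<exists>z\<in>{0<..\<epsilon>}. pE t \<epsilon> \<gamma> = t^2 * pE_aux t \<gamma> z))
   \<and> (\<forall>t \<epsilon> \<gamma>. \<epsilon> > 0 \<longrightarrow> \<gamma> > 0 \<longrightarrow>
        pE t \<epsilon> \<gamma> = (if \<epsilon> * \<bar>t\<bar> \<le> t_gam \<gamma>
                        then kappa * t^2 / \<epsilon> + \<epsilon> * t^4 / 24
                        else sqrt (6 * kappa * \<gamma>^2 + 1) / (6 * \<gamma>) * \<bar>t\<bar>^3))
   \<and> (\<forall>t \<epsilon> \<gamma>. \<epsilon> > 0 \<longrightarrow> \<gamma> \<ge> gamma_star \<longrightarrow>
        pR t \<epsilon> \<gamma> = (if \<epsilon> * \<bar>t\<bar> \<le> t_inf
                        then kappa * t^2 / \<epsilon> + \<epsilon> * t^4 / 24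
                        else \<epsilon> * t^4 / 12))
   \<and> (\<forall>t \<epsilon> \<gamma>. \<epsilon> > 0 \<longrightarrow> \<gamma> > 0 \<longrightarrow> \<gamma> < gamma_star \<longrightarrow>
        pR t \<epsilon> \<gamma> = (if \<epsilon> * \<bar>t\<bar> \<le> t1_gam \<gamma>
                        then kappa * t^2 / \<epsilon> + \<epsilon> * t^4 / 24
                        else if \<epsilon> * \<bar>t\<bar> \<le> t2_gam \<gamma>
                        then \<bar>t\<bar>^3 / (6 * \<gamma>)
                        else \<epsilon> * t^4 / 12))
   \<and> (\<forall>t \<epsilon> \<gamma>. \<epsilon> > 0 \<longrightarrow> \<gamma> > 0 \<longrightarrow> pR t \<epsilon> \<gamma> = pR t \<epsilon> (min \<gamma> gamma_star))
   \<and> mono_on {0<..} t_gam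
   \<and> mono_on {0<..} t1_gam
   \<and> (\<forall>\<gamma>>0. t_gam \<gamma> \<le> t1_gam \<gamma> \<and> t1_gam \<gamma> \<le> t_inf)
   \<and> (\<forall>t \<epsilon> \<gamma>1 \<gamma>2. \<epsilon> > 0 \<longrightarrow> 0 < \<gamma>1 \<longrightarrow> \<gamma>1 \<le> \<gamma>2 \<longrightarrow>
        pE t \<epsilon> \<gamma>2 \<le> pE t \<epsilon> \<gamma>1 \<and> pR t \<epsilon> \<gamma>2 \<le> pR t \<epsilon> \<gamma>1)
   \<and> (\<forall>t \<epsilon> \<gamma>1 \<gamma>2. \<epsilon> > 0 \<longrightarrow> gamma_star \<le> \<gamma>1 \<longrightarrow> gamma_star \<le> \<gamma>2 \<longrightarrow>
        pR t \<epsilon> \<gamma>1 = pR t \<epsilon> \<gamma>2)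
   \<and> (\<forall>t \<epsilon>1 \<epsilon>2 \<gamma>. \<gamma> > 0 \<longrightarrow> 0 < \<epsilon>1 \<longrightarrow> \<epsilon>1 \<le> \<epsilon>2 \<longrightarrow>
        pE t \<epsilon>2 \<gamma> \<le> pE t \<epsilon>1 \<gamma>)"
  proof -
  note C = claim1[OF assms(1,2,4,5,6,7)] claim2[OF assms(1,2,4,5,6,7)]
  show ?thesis
  proof (intro conjI allI impI)
    fix t \<epsilon> \<gamma> :: real assume "\<epsilon> > 0" "\<gamma> > 0"
    then show "cmod (\<Sum>k=1..n. chf M X k t - 1 + complex_of_real (sig2 M X k * t^2 / 2)) \<le> pE t \<epsilon> \<gamma> * LE3 M X n \<epsilon> \<gamma>"
      using C(1) by blast
  next
    fix t \<epsilon> \<gamma> :: real assume "\<epsilon> > 0" "\<gamma> > 0"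
    then show "cmod (\<Sum>k=1..n. chf M X k t - 1 + complex_of_real (sig2 M X k * t^2 / 2)) \<le> pR t \<epsilon> \<gamma> * LR3 M X n \<epsilon> \<gamma>"
      using C(2) by blast
  next
    fix t \<epsilon> \<gamma> :: real assume "\<epsilon> > 0" "\<gamma> > 0"
    then show "\<exists>z\<in>{0<..\<epsilon>}. pE t \<epsilon> \<gamma> = t^2 * pE_aux t \<gamma> z" using pE_main by blast
  next
    fix t \<epsilon> \<gamma> :: real assume "\<epsilon> > 0" "\<gamma> > 0"
    then show "pE t \<epsilon> \<gamma> = (if \<epsilon> * \<bar>t\<bar> \<le> t_gam \<gamma>
                        then kappa * t^2 / \<epsilon> + \<epsilon> * t^4 / 24
                        else sqrt (6 * kappa * \<gamma>^2 + 1) / (6 * \<gamma>) * \<bar>t\<bar>^3)" using pE_main by blast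
  next
    fix t \<epsilon> \<gamma> :: real assume "\<epsilon> > 0" "\<gamma> \<ge> gamma_star"
    then show "pR t \<epsilon> \<gamma> = (if \<epsilon> * \<bar>t\<bar> \<le> t_inf
                        then kappa * t^2 / \<epsilon> + \<epsilon> * t^4 / 24
                        else \<epsilon> * t^4 / 12)" by (rule claim5)
  next
    fix t \<epsilon> \<gamma> :: real assume "\<epsilon> > 0" "\<gamma> > 0" "\<gamma> < gamma_star"
    then show "pR t \<epsilon> \<gamma> = (if \<epsilon> * \<bar>t\<bar> \<le> t1_gam \<gamma>
                        then kappa * t^2 / \<epsilon> + \<epsilon> * t^4 / 24
                        else if \<epsilon> * \<bar>t\<bar> \<le> t2_gam \<gamma>
                        then \<bar>t\<bar>^3 / (6 * \<gamma>)
                        else \<epsilon> * t^4 / 12)" by (rule claim6)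
  next
    fix t \<epsilon> \<gamma> :: real assume "\<epsilon> > 0" "\<gamma> > 0"
    then show "pR t \<epsilon> \<gamma> = pR t \<epsilon> (min \<gamma> gamma_star)" by (rule claim7)
  next
    show "mono_on {0<..} t_gam" by (rule claim89(1))
  next
    show "mono_on {0<..} t1_gam" by (rule claim89(2))
  next
    fix \<gamma> :: real assume "\<gamma> > 0"
    then show "t_gam \<gamma> \<le> t1_gam \<gamma>" using claim10 by blast
  next
    fix \<gamma> :: real assume "\<gamma> > 0"
    then show "t1_gam \<gamma> \<le> t_inf" using claim10 by blast
  next
    fix t \<epsilon> \<gamma>1 \<gamma>2 :: real assume "\<epsilon> > 0" "0 < \<gamma>1" "\<gamma>1 \<le> \<gamma>2"
    then show "pE t \<epsilon> \<gamma>2 \<le> pE t \<epsilon> \<gamma>1" using claim11 by blast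
  next
    fix t \<epsilon> \<gamma>1 \<gamma>2 :: real assume "\<epsilon> > 0" "0 < \<gamma>1" "\<gamma>1 \<le> \<gamma>2"
    then show "pR t \<epsilon> \<gamma>2 \<le> pR t \<epsilon> \<gamma>1" using claim11 by blast
  next
    fix t \<epsilon> \<gamma>1 \<gamma>2 :: real assume "\<epsilon> > 0" "gamma_star \<le> \<gamma>1" "gamma_star \<le> \<gamma>2"
    then show "pR t \<epsilon> \<gamma>1 = pR t \<epsilon> \<gamma>2" by (rule claim12)
  next
    fix t \<epsilon>1 \<epsilon>2 \<gamma> :: real assume "\<gamma> > 0" "0 < \<epsilon>1" "\<epsilon>1 \<le> \<epsilon>2"
    then show "pE t \<epsilon>2 \<gamma> \<le> pE t \<epsilon>1 \<gamma>" by (rule claim13)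
  qed
qed

end
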